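(* Let $\mathbb{R}^d_+=\{x_d>0\}$, $s\in(0,1)$, and $K_{\mathbb{R}^d_+}(x,y)=c_{d,s}\big(|x-y|^{-d-2s}+|(x'-y',x_d+y_d)|^{-d-2s}\big)$. For all sufficiently smooth $\phi,\psi$ on $\mathbb{R}^d_+$ (for which the integrals converge), $$\int_{\mathbb{R}^d_+}\phi(x)\,(-\Delta)^s_{SR}\psi(x)\,dx=\frac12\iint_{\mathbb{R}^d_+\times\mathbb{R}^d_+}(\phi(x)-\phi(y))(\psi(x)-\psi(y))K_{\mathbb{R}^d_+}(x,y)\,dx\,dy.$$ In particular $\int\phi\,(-\Delta)^s_{SR}\psi=\int\psi\,(-\Delta)^s_{SR}\phi$.
   Context: $c_{d,s}=\big(\int_{\mathbb{R}^d}\frac{1-\cos\zeta_1}{|\zeta|^{d+2s}}d\zeta\big)^{-1}$. On the half-space, $\eta(x,w)=x+w$ if $x_d+w_d\ge0$ and $\eta(x,w)=(x'+w',-x_d-w_d)$ otherwise, and $(-\Delta)^s_{SR}\psi(x)=c_{d,s}\,\mathrm{P.V.}\int_{\mathbb{R}^d}\frac{\psi(x)-\psi(\eta(x,w))}{|w|^{d+2s}}dw$. *)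

theory Defs
  imports "HOL-Analysis.Analysis"
begin

text \<open>Euclidean space R^d is modelled as real^'n with d = CARD('n); a fixed index k
  plays the role of the last coordinate x_d.\<close>

definition halfspace :: "'n::finite \<Rightarrow> (real^'n) set" where
  "halfspace k = {x. x $ k > 0}"

definition reflect :: "'n::finite \<Rightarrow> real^'n \<Rightarrow> real^'n" where
  "reflect k v = (\<chi> i. if i = k then - (v $ i) else v $ i)"

definition eta :: "'n::finite \<Rightarrow> real^'n \<Rightarrow> real^'n \<Rightarrow> real^'n" where
  "eta k x w = (if x $ k + w $ k \<ge> 0 then x + w else reflect k (x + w))"

text \<open>c_{d,s}; the coordinate used in 1 - cos(zeta_1) is given by j (value independent of j).\<close>
definition c_ds :: "real \<Rightarrow> 'n::finite \<Rightarrow> real" where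
  "c_ds s j = 1 / (LINT \<zeta>|lborel. (1 - cos (\<zeta> $ j)) / norm (\<zeta>::real^'n) powr (real CARD('n) + 2 * s))"

definition frac_lap_SR :: "real \<Rightarrow> 'n::finite \<Rightarrow> (real^'n \<Rightarrow> real) \<Rightarrow> real^'n \<Rightarrow> real" where
  "frac_lap_SR s k \<psi> x = c_ds s k *
     Lim (at_right 0) (\<lambda>\<epsilon>::real. LINT w:{w. \<epsilon> < norm w}|lborel.
          (\<psi> x - \<psi> (eta k x w)) / norm (w::real^'n) powr (real CARD('n) + 2 * s))"

definition kernel_half :: "real \<Rightarrow> 'n::finite \<Rightarrow> real^'n \<Rightarrow> real^'n \<Rightarrow> real" where
  "kernel_half s k x y = c_ds s k *
     (norm (x - y) powr (- (real CARD('n) + 2 * s)) + norm (x - reflect k y) powr (- (real CARD('n) + 2 * s)))"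

definition C2 :: "(real^'n::finite \<Rightarrow> real) \<Rightarrow> bool" where
  "C2 f \<longleftrightarrow> (\<exists>Df :: real^'n \<Rightarrow> ((real^'n) \<Rightarrow>\<^sub>L real). \<exists>D2f :: real^'n \<Rightarrow> ((real^'n) \<Rightarrow>\<^sub>L ((real^'n) \<Rightarrow>\<^sub>L real)).
      (\<forall>x. (f has_derivative blinfun_apply (Df x)) (at x)) \<and>
      (\<forall>x. (Df has_derivative blinfun_apply (D2f x)) (at x)) \<and>
      continuous_on UNIV D2f)"

end

theory Submission
  imports Defs
begin


lemma nn_1d_pow0:
  fixes c R :: real assumes c: "c > -1" and R: "R \<ge> 0"
  shows "(\<integral>\<^sup>+t. indicator {-R..R} t * ennreal (\<bar>t\<bar> powr c) \<partial>lborel) < \<infinity>"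
proof -
  obtain A where A: "((\<lambda>t. t powr c) has_integral A) {0..R}"
    using has_integral_powr_from_0[OF c R] by blast
  have A1: "((\<lambda>t. \<bar>t\<bar> powr c) has_integral A) {0..R}"
    by (rule has_integral_spike_eq[THEN iffD1, OF negligible_empty _ A]) auto
  have A2: "((\<lambda>t. \<bar>t\<bar> powr c) has_integral A) {-R..0}"
  proof -
    have "((\<lambda>x. \<bar>-x\<bar> powr c) has_integral A) {-R..-0}"
      by (subst has_integral_reflect_real) (rule A1)
    then show ?thesis by simp
  qed
  have "((\<lambda>t. \<bar>t\<bar> powr c) has_integral (A + A)) {-R..R}"
    by (rule has_integral_combine[OF _ _ A2 A1]) (use R in auto)
  then have "((\<lambda>t. indicator {-R..R} t * (\<bar>t\<bar> powr c)) has_integral (A + A)) UNIV"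
  proof -
    have eq: "(\<lambda>t. indicator {-R..R} t * (\<bar>t\<bar> powr c)) = (\<lambda>t. if t \<in> {-R..R} then \<bar>t\<bar> powr c else 0)"
      by (auto simp: indicator_def)
    show ?thesis unfolding eq has_integral_restrict_UNIV by fact
  qed
  then have "(\<integral>\<^sup>+t. ennreal (indicator {-R..R} t * (\<bar>t\<bar> powr c)) \<partial>lborel) = ennreal (A + A)"
    by (intro nn_integral_has_integral_lborel) auto
  moreover have "(\<integral>\<^sup>+t. indicator {-R..R} t * ennreal (\<bar>t\<bar> powr c) \<partial>lborel) = (\<integral>\<^sup>+t. ennreal (indicator {-R..R} t * (\<bar>t\<bar> powr c)) \<partial>lborel)"
    by (auto intro!: nn_integral_cong simp: indicator_def)
  ultimately show ?thesis by simp
qed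

lemma nn_abs_le:
  fixes f :: "real \<Rightarrow> ennreal" assumes [measurable]: "f \<in> borel_measurable borel"
  shows "(\<integral>\<^sup>+t. f \<bar>t\<bar> \<partial>lborel) \<le> 2 * (\<integral>\<^sup>+t. f t \<partial>lborel)"
proof -
  have "(\<integral>\<^sup>+t. f \<bar>t\<bar> \<partial>lborel) \<le> (\<integral>\<^sup>+t. f t + f (-t) \<partial>lborel)"
    by (intro nn_integral_mono) (auto simp: abs_if)
  also have "\<dots> = (\<integral>\<^sup>+t. f t \<partial>lborel) + (\<integral>\<^sup>+t. f (-t) \<partial>lborel)"
    by (intro nn_integral_add) auto
  also have "(\<integral>\<^sup>+t. f (-t) \<partial>lborel) = (\<integral>\<^sup>+t. f t \<partial>lborel)"
    using nn_integral_real_affine[of f "-1" 0] by simp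
  finally show ?thesis by (simp add: mult_2)
qed

lemma nn_1d_tail:
  fixes e :: real assumes e: "e < -1"
  shows "(\<integral>\<^sup>+t. ennreal ((1 + \<bar>t\<bar>) powr e) \<partial>lborel) < \<infinity>"
proof -
  obtain v where v: "((\<lambda>x. x powr e) has_integral v) {1..}"
    using has_integral_powr_to_inf[OF e, of 1] by auto
  have eq: "(\<lambda>t. indicator {1..} t * (t powr e)) = (\<lambda>t. if t \<in> {1..} then t powr e else 0)"
    by (auto simp: indicator_def)
  have "((\<lambda>t. indicator {1..} t * (t powr e)) has_integral v) UNIV"
    unfolding eq has_integral_restrict_UNIV by fact
  then have I1: "(\<integral>\<^sup>+t. ennreal (indicator {1..} t * (t powr e)) \<partial>lborel) = ennreal v"
    by (intro nn_integral_has_integral_lborel) auto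
  have "(\<integral>\<^sup>+t. ennreal ((1 + \<bar>t\<bar>) powr e) \<partial>lborel)
      \<le> (\<integral>\<^sup>+t. indicator {-1..1} t + ennreal (indicator {1..} \<bar>t\<bar> * (\<bar>t\<bar> powr e)) \<partial>lborel)"
  proof (intro nn_integral_mono)
    fix t :: real
    show "ennreal ((1 + \<bar>t\<bar>) powr e) \<le> indicator {-1..1} t + ennreal (indicator {1..} \<bar>t\<bar> * (\<bar>t\<bar> powr e))"
    proof (cases "\<bar>t\<bar> \<le> 1")
      case True
      have ne: "1 + \<bar>t\<bar> \<noteq> 0" by linarith
      have "(1 + \<bar>t\<bar>) powr e \<le> (1 + \<bar>t\<bar>) powr 0" using e by (intro powr_mono) auto
      then have "ennreal ((1 + \<bar>t\<bar>) powr e) \<le> 1" using ne by (simp add: ennreal_le_1)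
      also have "1 \<le> (indicator {-1..1} t :: ennreal)" using True by (auto simp: indicator_def)
      finally show ?thesis by (rule add_increasing2[rotated]) simp
    next
      case False
      have "(1 + \<bar>t\<bar>) powr e \<le> \<bar>t\<bar> powr e" using e False by (intro powr_mono2') auto
      then show ?thesis using False by (auto simp: indicator_def)
    qed
  qed
  also have "\<dots> = 2 + (\<integral>\<^sup>+t. ennreal (indicator {1..} \<bar>t\<bar> * (\<bar>t\<bar> powr e)) \<partial>lborel)"
    by (subst nn_integral_add) auto
  also have "(\<integral>\<^sup>+t. ennreal (indicator {1..} \<bar>t\<bar> * (\<bar>t\<bar> powr e)) \<partial>lborel) \<le> 2 * ennreal v"
    using nn_abs_le[of "\<lambda>t. ennreal (indicator {1..} t * (t powr e))"] I1 by simp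
  finally show ?thesis
    by (auto simp: ennreal_mult_less_top top_unique intro: le_less_trans ennreal_less_top)
qed

lemma hyperplane_null:
  fixes i :: "'a::euclidean_space" assumes "i \<in> Basis"
  shows "{w::'a. w \<bullet> i = 0} \<in> null_sets lborel"
proof -
  have "negligible {w::'a. w \<bullet> i = 0}" using assms by (rule negligible_standard_hyperplane)
  then show ?thesis
    by (auto simp: null_sets_completion_iff negligible_iff_null_sets)
qed

lemma AE_coords_nonzero: "AE w in lborel. \<forall>i\<in>Basis. (w::'a::euclidean_space) \<bullet> i \<noteq> 0"
proof (subst AE_finite_all)
  show "finite (Basis::'a set)" by simp
  show "\<forall>i\<in>Basis. AE w in lborel. (w::'a) \<bullet> i \<noteq> 0"
  proof
    fix i :: 'a assume i: "i \<in> Basis"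
    show "AE w in lborel. w \<bullet> i \<noteq> 0"
      using hyperplane_null[OF i] by (rule AE_not_in[THEN AE_mp]) auto
  qed
qed

lemma prod_fin_less_top:
  fixes f :: "'b \<Rightarrow> ennreal" assumes "\<And>i. i \<in> I \<Longrightarrow> f i < \<infinity>"
  shows "(\<Prod>i\<in>I. f i) < \<infinity>"
  using assms by (induction I rule: infinite_finite_induct) (auto simp: ennreal_mult_less_top)

lemma radial_ball:
  fixes b R :: real assumes b: "b > - real DIM('a::euclidean_space)"
  shows "(\<integral>\<^sup>+w. indicator (ball (0::'a) R) w * ennreal (norm w powr b) \<partial>lborel) < \<infinity>"
proof (cases "b \<ge> 0")
  case True
  have "(\<integral>\<^sup>+w. indicator (ball (0::'a) R) w * ennreal (norm w powr b) \<partial>lborel)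
      \<le> (\<integral>\<^sup>+w. ennreal (max R 0 powr b) * indicator (ball (0::'a) R) w \<partial>lborel)"
  proof (intro nn_integral_mono)
    fix w :: 'a
    show "indicator (ball 0 R) w * ennreal (norm w powr b) \<le> ennreal (max R 0 powr b) * indicator (ball 0 R) w"
    proof (cases "w \<in> ball 0 R")
      case True
      then have "norm w powr b \<le> max R 0 powr b" using \<open>b \<ge> 0\<close> by (intro powr_mono2) auto
      then show ?thesis using True by (simp add: ennreal_leI)
    qed simp
  qed
  also have "\<dots> = ennreal (max R 0 powr b) * emeasure lborel (ball (0::'a) R)"
    by (subst nn_integral_cmult_indicator) auto
  also have "\<dots> < \<infinity>" using emeasure_lborel_ball_finite[of "0::'a" R]
    by (simp add: ennreal_mult_less_top)
  finally show ?thesis .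
next
  case False
  define d where "d = real DIM('a)"
  have d: "d > 0" unfolding d_def by simp
  define c where "c = b / d"
  have c: "c > -1" "c < 0" using b False d by (auto simp: c_def d_def field_simps)
  have "(\<integral>\<^sup>+w. indicator (ball (0::'a) R) w * ennreal (norm w powr b) \<partial>lborel)
      \<le> (\<integral>\<^sup>+w. (\<Prod>i\<in>Basis. indicator {-R..R} ((w::'a) \<bullet> i) * ennreal (\<bar>w \<bullet> i\<bar> powr c)) \<partial>lborel)"
  proof (rule nn_integral_mono_AE)
    show "AE w in lborel. indicator (ball (0::'a) R) w * ennreal (norm w powr b)
        \<le> (\<Prod>i\<in>Basis. indicator {-R..R} (w \<bullet> i) * ennreal (\<bar>w \<bullet> i\<bar> powr c))"
      using AE_coords_nonzero
    proof eventually_elim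
      fix w :: 'a assume nz: "\<forall>i\<in>Basis. w \<bullet> i \<noteq> 0"
      show "indicator (ball (0::'a) R) w * ennreal (norm w powr b)
        \<le> (\<Prod>i\<in>Basis. indicator {-R..R} (w \<bullet> i) * ennreal (\<bar>w \<bullet> i\<bar> powr c))"
      proof (cases "w \<in> ball 0 R")
        case True
        have le: "\<bar>w \<bullet> i\<bar> \<le> norm w" if "i \<in> Basis" for i using that by (rule Basis_le_norm)
        have ind: "indicator {-R..R} (w \<bullet> i) = (1::ennreal)" if "i \<in> Basis" for i
          using le[OF that] True by (auto simp: indicator_def abs_le_iff)
        have wpos: "norm w > 0" using nz by (metis SOME_Basis inner_zero_left zero_less_norm_iff)
        have "norm w powr b = (\<Prod>i\<in>(Basis::'a set). norm w powr c)"
        proof -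
          have "(norm w powr c) ^ DIM('a) = (norm w powr c) powr (real DIM('a))"
            using wpos by (simp add: powr_realpow)
          also have "\<dots> = norm w powr b" using d by (simp add: powr_powr c_def d_def)
          finally show ?thesis by (simp add: prod_constant)
        qed
        also have "\<dots> \<le> (\<Prod>i\<in>Basis. \<bar>w \<bullet> i\<bar> powr c)"
          by (intro prod_mono conjI powr_mono2' le) (use c nz in auto)
        finally have "ennreal (norm w powr b) \<le> ennreal (\<Prod>i\<in>Basis. \<bar>w \<bullet> i\<bar> powr c)"
          by (rule ennreal_leI)
        then show ?thesis using True
          by (simp add: ind prod_ennreal)
      qed simp
    qed
  qed
  also have "\<dots> = (\<Prod>i\<in>(Basis::'a set). (\<integral>\<^sup>+t. indicator {-R..R} t * ennreal (\<bar>t\<bar> powr c) \<partial>lborel))"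
    by (rule nn_integral_lborel_prod) auto
  also have "\<dots> < \<infinity>"
  proof (intro prod_fin_less_top)
    show "(\<integral>\<^sup>+t. indicator {-R..R} t * ennreal (\<bar>t\<bar> powr c) \<partial>lborel) < \<infinity>" for i :: 'a
    proof (cases "R \<ge> 0")
      case True then show ?thesis using nn_1d_pow0[OF c(1)] by blast
    next
      case False then show ?thesis by simp
    qed
  qed
  finally show ?thesis .
qed

lemma radial_tail:
  fixes b \<rho> :: real assumes b: "b < - real DIM('a::euclidean_space)" and \<rho>: "\<rho> > 0"
  shows "(\<integral>\<^sup>+w. indicator {w::'a. \<rho> \<le> norm w} w * ennreal (norm w powr b) \<partial>lborel) < \<infinity>"
proof -
  define d where "d = real DIM('a)"
  have d: "d > 0" unfolding d_def by simp
  define c where "c = b / d"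
  have c: "c < -1" using b d by (auto simp: c_def d_def field_simps)
  have bneg: "b < 0" using b d d_def by linarith
  define K where "K = ((1 + \<rho>) / \<rho>) powr (- b)"
  have "(\<integral>\<^sup>+w. indicator {w::'a. \<rho> \<le> norm w} w * ennreal (norm w powr b) \<partial>lborel)
      \<le> (\<integral>\<^sup>+w. ennreal K * (\<Prod>i\<in>Basis. ennreal ((1 + \<bar>(w::'a) \<bullet> i\<bar>) powr c)) \<partial>lborel)"
  proof (rule nn_integral_mono)
    fix w :: 'a
    show "indicator {w::'a. \<rho> \<le> norm w} w * ennreal (norm w powr b)
        \<le> ennreal K * (\<Prod>i\<in>Basis. ennreal ((1 + \<bar>w \<bullet> i\<bar>) powr c))"
    proof (cases "\<rho> \<le> norm w")
      case True
      have wpos: "norm w > 0" using True \<rho> by linarith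
      have "(\<Prod>i\<in>(Basis::'a set). 1 + \<bar>w \<bullet> i\<bar>) \<le> (\<Prod>i\<in>(Basis::'a set). 1 + norm w)"
        by (intro prod_mono) (auto simp: Basis_le_norm)
      also have "\<dots> = (1 + norm w) powr d"
        by (simp add: prod_constant d_def powr_realpow[of "1 + norm w", symmetric] add_pos_nonneg)
      finally have P: "(\<Prod>i\<in>(Basis::'a set). 1 + \<bar>w \<bullet> i\<bar>) \<le> (1 + norm w) powr d" .
      have Ppos: "(\<Prod>i\<in>(Basis::'a set). 1 + \<bar>w \<bullet> i\<bar>) > 0"
        by (intro prod_pos) auto
      have "(1 + norm w) powr b = ((1 + norm w) powr d) powr c"
        using d by (simp add: powr_powr c_def)
      also have "\<dots> \<le> (\<Prod>i\<in>(Basis::'a set). 1 + \<bar>w \<bullet> i\<bar>) powr c"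
        using c P Ppos by (intro powr_mono2') auto
      also have "\<dots> = (\<Prod>i\<in>Basis. (1 + \<bar>w \<bullet> i\<bar>) powr c)"
        by (rule prod_powr_distrib)
      finally have A: "(1 + norm w) powr b \<le> (\<Prod>i\<in>Basis. (1 + \<bar>w \<bullet> i\<bar>) powr c)" .
      have "(1 + norm w) / norm w \<le> (1 + \<rho>) / \<rho>"
        using True \<rho> wpos by (simp add: field_simps)
      then have B: "((1 + norm w) / norm w) powr (- b) \<le> K"
        unfolding K_def using bneg wpos by (intro powr_mono2) auto
      have "norm w powr b = (1 + norm w) powr b * ((1 + norm w) / norm w) powr (- b)"
      proof -
        have h: "1 + norm w > 0" using wpos by linarith
        have e1: "((1 + norm w) / norm w) powr (- b) = (1 + norm w) powr (- b) / norm w powr (- b)"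
          by (rule powr_divide)
        have e2: "(1 + norm w) powr b * (1 + norm w) powr (- b) = 1"
          using powr_add[of "1 + norm w" b "-b"] h by simp
        have e3: "norm w powr (- b) = inverse (norm w powr b)" by (simp add: powr_minus)
        have e4: "norm w powr b > 0" using wpos by simp
        show ?thesis unfolding e1 e3 using e2 e4 by (simp add: field_simps)
      qed
      also have "\<dots> \<le> (\<Prod>i\<in>Basis. (1 + \<bar>w \<bullet> i\<bar>) powr c) * K"
        using A B by (intro mult_mono) (auto intro: prod_nonneg)
      finally have "ennreal (norm w powr b) \<le> ennreal K * ennreal (\<Prod>i\<in>Basis. (1 + \<bar>w \<bullet> i\<bar>) powr c)"
        by (subst ennreal_mult'[symmetric]) (auto simp: K_def intro!: ennreal_leI simp: mult.commute)
      then show ?thesis using True by (simp add: prod_ennreal)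
    qed simp
  qed
  also have "\<dots> = ennreal K * (\<integral>\<^sup>+w. (\<Prod>i\<in>Basis. ennreal ((1 + \<bar>(w::'a) \<bullet> i\<bar>) powr c)) \<partial>lborel)"
    by (rule nn_integral_cmult) auto
  also have "(\<integral>\<^sup>+w. (\<Prod>i\<in>Basis. ennreal ((1 + \<bar>(w::'a) \<bullet> i\<bar>) powr c)) \<partial>lborel)
     = (\<Prod>i\<in>(Basis::'a set). (\<integral>\<^sup>+t. ennreal ((1 + \<bar>t\<bar>) powr c) \<partial>lborel))"
    by (rule nn_integral_lborel_prod) auto
  also have "ennreal K * \<dots> < \<infinity>"
    using nn_1d_tail[OF c] by (auto simp: ennreal_mult_less_top power_less_top_ennreal)
  finally show ?thesis .
qed


lemma deriv_zero_outside:
  fixes f :: "'a::real_normed_vector \<Rightarrow> 'b::real_normed_vector"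
  assumes "(f has_derivative F) (at x)" "open U" "x \<in> U" "\<And>y. y \<in> U \<Longrightarrow> f y = 0"
  shows "F = (\<lambda>h. 0)"
proof -
  have "((\<lambda>_. 0) has_derivative (\<lambda>h. 0)) (at x)" by simp
  then have "(f has_derivative (\<lambda>h. 0)) (at x)"
    by (rule has_derivative_transform_within_open[of _ _ _ _ U]) (use assms in auto)
  then show ?thesis using assms(1) by (rule has_derivative_unique[symmetric])
qed

lemma cont_bounded_supp:
  fixes g :: "'a::euclidean_space \<Rightarrow> 'b::real_normed_vector"
  assumes "continuous_on UNIV g" "\<And>x. norm x > R0 \<Longrightarrow> g x = 0"
  obtains C where "C \<ge> 0" "\<And>x. norm (g x) \<le> C"
proof -
  have "compact (g ` cball 0 R0)"
    by (rule compact_continuous_image) (use assms(1) continuous_on_subset in auto)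
  then obtain C where C: "\<And>y. y \<in> g ` cball 0 R0 \<Longrightarrow> norm y \<le> C"
    by (meson bounded_iff compact_imp_bounded)
  show ?thesis
  proof
    show "max C 0 \<ge> 0" by simp
    fix x show "norm (g x) \<le> max C 0"
    proof (cases "norm x \<le> R0")
      case True then show ?thesis using C[of "g x"] by auto
    next
      case False then show ?thesis using assms(2)[of x] by auto
    qed
  qed
qed

lemma C2_nice:
  fixes f :: "real^'n::finite \<Rightarrow> real"
  assumes "C2 f" "bounded {x. f x \<noteq> 0}"
  obtains R M L B where "R > 0" "M \<ge> 0" "L \<ge> 0" "B \<ge> 0"
    "\<And>x. \<bar>f x\<bar> \<le> M" "\<And>x y. \<bar>f x - f y\<bar> \<le> L * norm (x - y)"
    "\<And>x w. \<bar>2 * f x - f (x + w) - f (x - w)\<bar> \<le> B * (norm w)\<^sup>2"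
    "\<And>x. f x \<noteq> 0 \<Longrightarrow> norm x < R" "continuous_on UNIV f"
proof -
  obtain Df :: "real^'n \<Rightarrow> ((real^'n) \<Rightarrow>\<^sub>L real)" and D2f :: "real^'n \<Rightarrow> ((real^'n) \<Rightarrow>\<^sub>L ((real^'n) \<Rightarrow>\<^sub>L real))"
    where Df: "\<And>x. (f has_derivative blinfun_apply (Df x)) (at x)"
      and D2f: "\<And>x. (Df has_derivative blinfun_apply (D2f x)) (at x)"
      and cD2: "continuous_on UNIV D2f"
    using assms(1) unfolding C2_def by blast
  obtain R0 where R0: "\<And>x. f x \<noteq> 0 \<Longrightarrow> norm x \<le> R0"
    using assms(2) unfolding bounded_iff by auto
  define R where "R = max R0 0 + 1"
  have R: "R > 0" unfolding R_def by simp
  have fz: "f y = 0" if "y \<in> {y. norm y > R0}" for y using R0[of y] that by force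
  have opn: "open {y::real^'n. norm y > R0}" by (intro open_Collect_less continuous_intros)
  have Dfz: "Df x = 0" if "norm x > R0" for x
  proof -
    have "blinfun_apply (Df x) = (\<lambda>h. 0)"
      by (rule deriv_zero_outside[OF Df opn]) (use that fz in auto)
    then show ?thesis by (simp add: blinfun_eqI)
  qed
  have D2fz: "D2f x = 0" if "norm x > R0" for x
  proof -
    have "blinfun_apply (D2f x) = (\<lambda>h. 0)"
      by (rule deriv_zero_outside[OF D2f opn]) (use that Dfz in auto)
    then show ?thesis by (simp add: blinfun_eqI)
  qed
  have cf: "continuous_on UNIV f"
    using Df by (meson continuous_at_imp_continuous_on has_derivative_continuous)
  have cDf: "continuous_on UNIV Df"
    using D2f by (meson continuous_at_imp_continuous_on has_derivative_continuous)
  obtain M where M: "M \<ge> 0" "\<And>x. norm (f x) \<le> M"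
  proof (rule cont_bounded_supp[OF cf, of R0])
    show "f x = 0" if "R0 < norm x" for x using R0[of x] that by linarith
  qed simp
  obtain L where L: "L \<ge> 0" "\<And>x. norm (Df x) \<le> L"
    by (rule cont_bounded_supp[OF cDf, of R0]) (use Dfz in auto)
  obtain B0 where B0: "B0 \<ge> 0" "\<And>x. norm (D2f x) \<le> B0"
    by (rule cont_bounded_supp[OF cD2, of R0]) (use D2fz in auto)
  have lip: "\<bar>f x - f y\<bar> \<le> L * norm (x - y)" for x y
  proof -
    have "norm (f x - f y) \<le> L * norm (x - y)"
      by (rule differentiable_bound[where S=UNIV and f'="\<lambda>x. blinfun_apply (Df x)"])
         (use Df L in \<open>auto simp: norm_blinfun.rep_eq[symmetric] intro: has_derivative_at_withinI\<close>)
    then show ?thesis by simp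
  qed
  have lipD: "norm (Df x - Df y) \<le> B0 * norm (x - y)" for x y
    by (rule differentiable_bound[where S=UNIV and f'="\<lambda>x. blinfun_apply (D2f x)"])
       (use D2f B0 in \<open>auto simp: norm_blinfun.rep_eq[symmetric] intro: has_derivative_at_withinI\<close>)
  have sec: "\<bar>2 * f x - f (x + w) - f (x - w)\<bar> \<le> (2 * B0) * (norm w)\<^sup>2" for x w
  proof -
    define g where "g v = f (x + v) + f (x - v)" for v
    have dg: "(g has_derivative (\<lambda>h. Df (x + v) h - Df (x - v) h)) (at v within cball 0 (norm w))" for v
    proof -
      have a1: "((\<lambda>v. x + v) has_derivative (\<lambda>h. h)) (at v)"
        by (rule has_derivative_eq_rhs, rule has_derivative_add[OF has_derivative_const has_derivative_ident]) simp
      have a2: "((\<lambda>v. x - v) has_derivative (\<lambda>h. - h)) (at v)"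
        by (rule has_derivative_eq_rhs, rule has_derivative_diff[OF has_derivative_const has_derivative_ident]) simp
      have b1: "((\<lambda>v. f (x + v)) has_derivative (\<lambda>h. Df (x + v) h)) (at v)"
        using has_derivative_compose[OF a1 Df] .
      have b2: "((\<lambda>v. f (x - v)) has_derivative (\<lambda>h. Df (x - v) (- h))) (at v)"
        using has_derivative_compose[OF a2 Df] .
      have "(g has_derivative (\<lambda>h. Df (x + v) h + Df (x - v) (- h))) (at v)"
        unfolding g_def by (rule has_derivative_add[OF b1 b2])
      then have "(g has_derivative (\<lambda>h. Df (x + v) h - Df (x - v) h)) (at v)"
        by (simp add: blinfun.minus_right)
      then show ?thesis by (rule has_derivative_at_withinI)
    qed
    have bd: "onorm (\<lambda>h. Df (x + v) h - Df (x - v) h) \<le> 2 * B0 * norm w" if "v \<in> cball 0 (norm w)" for v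
    proof -
      have "onorm (\<lambda>h. Df (x + v) h - Df (x - v) h) = norm (Df (x + v) - Df (x - v))"
        by (simp add: norm_blinfun.rep_eq blinfun.diff_left[abs_def] fun_diff_def)
      also have "\<dots> \<le> B0 * norm ((x + v) - (x - v))" by (rule lipD)
      also have "norm ((x + v) - (x - v)) = 2 * norm v"
      proof -
        have "(x + v) - (x - v) = 2 *\<^sub>R v" by (simp add: scaleR_2)
        then show ?thesis by simp
      qed
      also have "B0 * (2 * norm v) \<le> 2 * B0 * norm w" using that B0 by (auto intro: mult_left_mono)
      finally show ?thesis by simp
    qed
    have "norm (g w - g 0) \<le> (2 * B0 * norm w) * norm (w - 0)"
      by (rule differentiable_bound[OF convex_cball dg bd]) auto
    then show ?thesis by (simp add: g_def power2_eq_square algebra_simps abs_minus_commute)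
  qed
  show ?thesis
  proof
    show "R > 0" by fact
    show "M \<ge> 0" "L \<ge> 0" "2 * B0 \<ge> 0" using M L B0 by auto
    show "\<bar>f x\<bar> \<le> M" for x using M(2)[of x] by simp
    show "\<bar>f x - f y\<bar> \<le> L * norm (x - y)" for x y by (rule lip)
    show "\<bar>2 * f x - f (x + w) - f (x - w)\<bar> \<le> (2 * B0) * (norm w)\<^sup>2" for x w by (rule sec)
    show "norm x < R" if "f x \<noteq> 0" for x using R0[OF that] unfolding R_def by linarith
    show "continuous_on UNIV f" by fact
  qed
qed


lemma norm_sq_vec: "(norm (x::real^'n::finite))\<^sup>2 = (\<Sum>i\<in>UNIV. (x $ i)\<^sup>2)"
  by (simp add: norm_vec_def L2_set_def sum_nonneg)

lemma norm_le_compwise: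
  fixes u v :: "real^'n::finite"
  assumes "\<And>i. \<bar>u $ i\<bar> \<le> \<bar>v $ i\<bar>" shows "norm u \<le> norm v"
proof -
  have "(norm u)\<^sup>2 \<le> (norm v)\<^sup>2" unfolding norm_sq_vec
    by (intro sum_mono) (metis abs_ge_zero assms power2_abs power_mono)
  then show ?thesis by (rule power2_le_imp_le) simp
qed

lemma reflect_nth: "reflect k v $ i = (if i = k then - (v $ i) else v $ i)"
  by (simp add: reflect_def)

lemma reflect_reflect[simp]: "reflect k (reflect k x) = x"
  by (simp add: reflect_def vec_eq_iff)

lemma reflect_add: "reflect k (x + y) = reflect k x + reflect k y"
  by (simp add: reflect_def vec_eq_iff)

lemma reflect_diff: "reflect k (x - y) = reflect k x - reflect k y"
  by (simp add: reflect_def vec_eq_iff)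

lemma reflect_minus: "reflect k (- x) = - reflect k x"
  by (simp add: reflect_def vec_eq_iff)

lemma norm_reflect[simp]: "norm (reflect k x) = norm x"
proof -
  have "(norm (reflect k x))\<^sup>2 = (norm x)\<^sup>2" unfolding norm_sq_vec
    by (intro sum.cong) (auto simp: reflect_nth)
  then show ?thesis by (simp add: power2_eq_iff_nonneg)
qed

lemma norm_diff_reflect_swap: "norm (x - reflect k y) = norm (y - reflect k x)"
proof -
  have "norm (x - reflect k y) = norm (reflect k (x - reflect k y))" by simp
  also have "reflect k (x - reflect k y) = reflect k x - y" by (simp add: reflect_diff)
  also have "norm \<dots> = norm (y - reflect k x)" by (simp add: norm_minus_commute)
  finally show ?thesis .
qed

lemma norm_diff_le_reflect:
  assumes "x $ k \<ge> 0" "y $ k \<ge> 0"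
  shows "norm (x - y) \<le> norm (x - reflect k y)"
  by (rule norm_le_compwise) (use assms in \<open>auto simp: reflect_nth\<close>)

lemma norm_diff_reflect_ge: "norm (x - reflect k y) \<ge> x $ k + y $ k"
proof -
  have "\<bar>(x - reflect k y) $ k\<bar> \<le> norm (x - reflect k y)" by (rule component_le_norm_cart)
  then show ?thesis by (simp add: reflect_nth)
qed

lemma eta_dist_le:
  assumes "x $ k > 0" shows "norm (eta k x w - x) \<le> norm w"
proof (cases "x $ k + w $ k \<ge> 0")
  case True then show ?thesis by (simp add: eta_def)
next
  case False
  have "norm (reflect k (x + w) - x) \<le> norm w"
    by (rule norm_le_compwise) (use False assms in \<open>auto simp: reflect_nth\<close>)
  then show ?thesis using False by (simp add: eta_def)
qed

lemma eta_small: assumes "norm w < x $ k" shows "eta k x w = x + w"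
proof -
  have "\<bar>w $ k\<bar> \<le> norm w" by (rule component_le_norm_cart)
  then have "x $ k + w $ k \<ge> 0" using assms by linarith
  then show ?thesis by (simp add: eta_def)
qed

lemma eta_neg: assumes "x $ k + w $ k \<le> 0" shows "eta k x w = reflect k (x + w)"
proof (cases "x $ k + w $ k = 0")
  case True
  then have "reflect k (x + w) = x + w" by (simp add: reflect_def vec_eq_iff)
  then show ?thesis using True by (simp add: eta_def)
next
  case False then show ?thesis using assms by (simp add: eta_def)
qed

lemma reflect_as_affine:
  "reflect k x = (0::real^'n::finite) + (\<Sum>j\<in>Basis. ((if j = axis k 1 then -1 else 1) * (x \<bullet> j)) *\<^sub>R j)"
proof (rule euclidean_eqI)
  fix b :: "real^'n" assume b: "b \<in> Basis"
  then obtain i where i: "b = axis i 1" by (auto simp: Basis_vec_def)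
  have "(\<Sum>j\<in>Basis. ((if j = axis k 1 then -1 else 1) * (x \<bullet> j)) *\<^sub>R j) \<bullet> b
      = (if b = axis k 1 then -1 else 1) * (x \<bullet> b)"
  proof -
    have "(\<Sum>j\<in>Basis. ((if j = axis k 1 then -1 else 1) * (x \<bullet> j)) *\<^sub>R j) \<bullet> b
       = (\<Sum>j\<in>Basis. if j = b then (if b = axis k 1 then -1 else 1) * (x \<bullet> b) else 0)"
      unfolding inner_sum_left by (intro sum.cong) (auto simp: inner_Basis b)
    also have "\<dots> = (if b = axis k 1 then -1 else 1) * (x \<bullet> b)"
      using b by (simp add: sum.delta')
    finally show ?thesis .
  qed
  then show "reflect k x \<bullet> b = (0 + (\<Sum>j\<in>Basis. ((if j = axis k 1 then -1 else 1) * (x \<bullet> j)) *\<^sub>R j)) \<bullet> b"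
    using i by (auto simp: cart_eq_inner_axis[symmetric] reflect_nth axis_eq_axis)
qed

lemma reflect_measurable[measurable]: "reflect k \<in> borel_measurable borel"
proof -
  have "continuous_on UNIV (reflect k)"
    unfolding reflect_def
  proof (rule continuous_on_vec_lambda)
    fix i show "continuous_on UNIV (\<lambda>x::real^'a. if i = k then - x $ i else x $ i)"
      by (cases "i = k") (auto intro!: continuous_intros)
  qed
  then show ?thesis by (rule borel_measurable_continuous_onI)
qed

lemma lborel_reflect: "distr lborel borel (reflect k) = (lborel :: (real^'n::finite) measure)"
proof -
  have "lborel = density (distr lborel borel (\<lambda>x. (0::real^'n) + (\<Sum>j\<in>Basis. ((if j = axis k 1 then -1 else 1) * (x \<bullet> j)) *\<^sub>R j)))
      (\<lambda>_. (\<Prod>j\<in>Basis. \<bar>if (j::real^'n) = axis k 1 then -1 else 1 :: real\<bar>))"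
    by (rule lborel_affine_euclidean[where c="\<lambda>j. if j = axis k 1 then -1 else 1" and t=0]) auto
  also have "(\<lambda>x. (0::real^'n) + (\<Sum>j\<in>Basis. ((if j = axis k 1 then -1 else 1) * (x \<bullet> j)) *\<^sub>R j)) = reflect k"
    by (rule ext) (simp only: reflect_as_affine[symmetric])
  also have "(\<Prod>j\<in>Basis. \<bar>if (j::real^'n) = axis k 1 then -1 else 1 :: real\<bar>) = 1"
    by (intro prod.neutral) auto
  finally show ?thesis by (simp add: density_1)
qed

lemma lborel_uminus: "distr lborel borel uminus = (lborel :: 'a::euclidean_space measure)"
proof -
  have "lborel = density (distr lborel borel (\<lambda>x::'a. 0 + (-1) *\<^sub>R x)) (\<lambda>_. \<bar>-1::real\<bar> ^ DIM('a))"
    by (rule lborel_affine) simp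
  then show ?thesis by (simp add: density_1)
qed


lemma reflect_measurable_raw[measurable (raw)]:
  "f \<in> borel_measurable M \<Longrightarrow> (\<lambda>z. reflect k (f z)) \<in> borel_measurable M"
  using measurable_compose[OF _ reflect_measurable] by blast

lemma vec_nth_measurable_raw[measurable (raw)]:
  fixes f :: "'b \<Rightarrow> real^'n::finite"
  shows "f \<in> borel_measurable M \<Longrightarrow> (\<lambda>z. f z $ i) \<in> borel_measurable M"
proof -
  have "(\<lambda>v::real^'n. v $ i) \<in> borel_measurable borel"
    by (intro borel_measurable_continuous_onI linear_continuous_on bounded_linear_vec_nth)
  then show "f \<in> borel_measurable M \<Longrightarrow> (\<lambda>z. f z $ i) \<in> borel_measurable M"
    using measurable_compose by blast
qed

lemma eta_measurable_raw[measurable (raw)]: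
  fixes f g :: "'b \<Rightarrow> real^'n::finite"
  assumes [measurable]: "f \<in> borel_measurable M" "g \<in> borel_measurable M"
  shows "(\<lambda>z. eta k (f z) (g z)) \<in> borel_measurable M"
proof -
  have [measurable]: "(\<lambda>z. reflect k (f z + g z)) \<in> borel_measurable M"
    by (rule reflect_measurable_raw) measurable
  show ?thesis unfolding eta_def by measurable
qed

definition tk :: "real \<Rightarrow> real \<Rightarrow> real^'n::finite \<Rightarrow> real" where
  "tk a \<epsilon> w = (if \<epsilon> < norm w then norm w powr (-a) else 0)"

lemma tk_measurable[measurable]: "tk a \<epsilon> \<in> borel_measurable borel"
  unfolding tk_def by measurable

lemma tk_nonneg: "tk a \<epsilon> w \<ge> 0" by (simp add: tk_def)

lemma tk_minus: "tk a \<epsilon> (- w) = tk a \<epsilon> w" by (simp add: tk_def)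

lemma tk_integrable:
  assumes a: "a > real CARD('n::finite)" and e: "\<epsilon> > 0"
  shows "integrable lborel (tk a \<epsilon> :: real^'n \<Rightarrow> real)"
proof (rule integrableI_bounded)
  show "tk a \<epsilon> \<in> borel_measurable lborel" by simp
  have "(\<integral>\<^sup>+w. ennreal (norm (tk a \<epsilon> (w::real^'n))) \<partial>lborel)
     \<le> (\<integral>\<^sup>+w. indicator {w::real^'n. \<epsilon> \<le> norm w} w * ennreal (norm (w::real^'n) powr (-a)) \<partial>lborel)"
    by (intro nn_integral_mono) (auto simp: tk_def indicator_def)
  also have "\<dots> < \<infinity>" by (rule radial_tail) (use a e in auto)
  finally show "(\<integral>\<^sup>+w. ennreal (norm (tk a \<epsilon> (w::real^'n))) \<partial>lborel) < \<infinity>" .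
qed

lemma integral_shift:
  fixes g :: "real^'n::finite \<Rightarrow> real" assumes [measurable]: "g \<in> borel_measurable borel"
  shows "(\<integral>y. g (c + y) \<partial>lborel) = (\<integral>w. g w \<partial>lborel)"
  using integral_distr[of "(+) c" lborel borel g] by (simp add: lborel_distr_plus)

lemma integrable_shift:
  fixes g :: "real^'n::finite \<Rightarrow> real" assumes [measurable]: "g \<in> borel_measurable borel"
  shows "integrable lborel (\<lambda>y. g (c + y)) \<longleftrightarrow> integrable lborel g"
  using integrable_distr_eq[of "(+) c" lborel borel g] by (simp add: lborel_distr_plus)

lemma nn_integral_shift:
  fixes g :: "real^'n::finite \<Rightarrow> ennreal" assumes [measurable]: "g \<in> borel_measurable borel"
  shows "(\<integral>\<^sup>+y. g (c + y) \<partial>lborel) = (\<integral>\<^sup>+w. g w \<partial>lborel)"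
  using nn_integral_distr[of "(+) c" lborel borel g] by (simp add: lborel_distr_plus)

lemma integral_reflect:
  fixes g :: "real^'n::finite \<Rightarrow> real" assumes [measurable]: "g \<in> borel_measurable borel"
  shows "(\<integral>y. g (reflect k y) \<partial>lborel) = (\<integral>w. g w \<partial>lborel)"
  using integral_distr[of "reflect k" lborel borel g] by (simp add: lborel_reflect)

lemma integrable_reflect:
  fixes g :: "real^'n::finite \<Rightarrow> real" assumes [measurable]: "g \<in> borel_measurable borel"
  shows "integrable lborel (\<lambda>y. g (reflect k y)) \<longleftrightarrow> integrable lborel g"
  using integrable_distr_eq[of "reflect k" lborel borel g] by (simp add: lborel_reflect)

lemma nn_integral_reflect:
  fixes g :: "real^'n::finite \<Rightarrow> ennreal" assumes [measurable]: "g \<in> borel_measurable borel"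
  shows "(\<integral>\<^sup>+y. g (reflect k y) \<partial>lborel) = (\<integral>\<^sup>+w. g w \<partial>lborel)"
  using nn_integral_distr[of "reflect k" lborel borel g] by (simp add: lborel_reflect)

lemma integral_uminus:
  fixes g :: "real^'n::finite \<Rightarrow> real" assumes [measurable]: "g \<in> borel_measurable borel"
  shows "(\<integral>y. g (- y) \<partial>lborel) = (\<integral>w. g w \<partial>lborel)"
  using integral_distr[of uminus lborel borel g] by (simp add: lborel_uminus)

lemma integrable_uminus:
  fixes g :: "real^'n::finite \<Rightarrow> real" assumes [measurable]: "g \<in> borel_measurable borel"
  shows "integrable lborel (\<lambda>y. g (- y)) \<longleftrightarrow> integrable lborel g"
  using integrable_distr_eq[of uminus lborel borel g] by (simp add: lborel_uminus)


lemma tk_diff_swap: "tk a \<epsilon> (- x + y) = tk a \<epsilon> (x - y)"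
proof -
  have "norm (- x + y) = norm (x - y)" by (metis add.commute diff_conv_add_uminus norm_minus_commute)
  then show ?thesis by (simp add: tk_def)
qed

lemma tk_shift_integrable:
  assumes a: "a > real CARD('n::finite)" and e: "\<epsilon> > 0"
  shows "integrable lborel (\<lambda>y::real^'n. tk a \<epsilon> (x - y))"
    and "integrable lborel (\<lambda>y::real^'n. tk a \<epsilon> (x - reflect k y))"
proof -
  have i0: "integrable lborel (tk a \<epsilon> :: real^'n \<Rightarrow> real)" by (rule tk_integrable[OF a e])
  have i1: "integrable lborel (\<lambda>y::real^'n. tk a \<epsilon> (- x + y))"
    using i0 by (subst integrable_shift) auto
  show "integrable lborel (\<lambda>y::real^'n. tk a \<epsilon> (x - y))"
    using i1 unfolding tk_diff_swap .
  have "integrable lborel (\<lambda>y::real^'n. tk a \<epsilon> (- x + reflect k y))"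
    using i1 by (subst integrable_reflect[where g="\<lambda>y. tk a \<epsilon> (- x + y)"]) auto
  then show "integrable lborel (\<lambda>y::real^'n. tk a \<epsilon> (x - reflect k y))"
    unfolding tk_diff_swap .
qed

lemma AE_not_hyper: "AE y in lborel. (y::real^'n::finite) $ k \<noteq> 0"
proof -
  have "{y::real^'n. y \<bullet> axis k 1 = 0} \<in> null_sets lborel"
    by (rule hyperplane_null) (auto simp: Basis_vec_def)
  then show ?thesis
    by (rule AE_not_in[THEN AE_mp]) (auto simp: cart_eq_inner_axis)
qed

lemma stepA:
  fixes \<psi> :: "real^'n::finite \<Rightarrow> real" and k :: 'n
  assumes [measurable]: "\<psi> \<in> borel_measurable borel" and M: "\<And>z. \<bar>\<psi> z\<bar> \<le> M"
    and a: "a > real CARD('n)" and e: "\<epsilon> > 0" and x: "x $ k > 0"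
  shows "(LINT w:{w. \<epsilon> < norm w}|lborel. (\<psi> x - \<psi> (eta k x w)) / norm w powr a)
       = (LINT y:halfspace k|lborel. (\<psi> x - \<psi> y) * (tk a \<epsilon> (x - y) + tk a \<epsilon> (x - reflect k y)))"
proof -
  define G1 where "G1 w = (if 0 < x$k + w$k then (\<psi> x - \<psi> (x + w)) * tk a \<epsilon> w else 0)" for w
  define G2 where "G2 w = (if x$k + w$k \<le> 0 then (\<psi> x - \<psi> (reflect k (x + w))) * tk a \<epsilon> w else 0)" for w
  have [measurable]: "G1 \<in> borel_measurable borel" "G2 \<in> borel_measurable borel"
    unfolding G1_def[abs_def] G2_def[abs_def] by measurable
  have M2: "\<bar>\<psi> u - \<psi> v\<bar> \<le> 2 * M" for u v using M[of u] M[of v] by linarith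
  have M0: "M \<ge> 0" using M[of x] by linarith
  have M3: "\<bar>\<psi> u - \<psi> v\<bar> * \<bar>tk a \<epsilon> w\<bar> \<le> 2 * \<bar>M\<bar> * \<bar>tk a \<epsilon> w\<bar>" for u v w
    using M2[of u v] M0 by (intro mult_right_mono) auto
  have tki: "integrable lborel (tk a \<epsilon> :: real^'n \<Rightarrow> real)" by (rule tk_integrable[OF a e])
  have bnd: "integrable lborel (\<lambda>w::real^'n. 2 * M * tk a \<epsilon> w)" using tki by simp
  have iG1: "integrable lborel G1"
  proof (rule Bochner_Integration.integrable_bound[OF bnd])
    show "AE w in lborel. norm (G1 w) \<le> norm (2 * M * tk a \<epsilon> w)"
      by (intro AE_I2) (auto simp: G1_def abs_mult M3)
  qed simp
  have iG2: "integrable lborel G2"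
  proof (rule Bochner_Integration.integrable_bound[OF bnd])
    show "AE w in lborel. norm (G2 w) \<le> norm (2 * M * tk a \<epsilon> w)"
      by (intro AE_I2) (auto simp: G2_def abs_mult M3)
  qed simp
  have L: "(LINT w:{w. \<epsilon> < norm w}|lborel. (\<psi> x - \<psi> (eta k x w)) / norm w powr a)
      = (\<integral>w. G1 w + G2 w \<partial>lborel)"
    unfolding set_lebesgue_integral_def
  proof (intro Bochner_Integration.integral_cong refl)
    fix w :: "real^'n"
    have div: "t / norm w powr a = t * norm w powr (-a)" for t by (simp add: powr_minus divide_inverse)
    show "indicator {w. \<epsilon> < norm w} w *\<^sub>R ((\<psi> x - \<psi> (eta k x w)) / norm w powr a) = G1 w + G2 w"
    proof (cases "0 < x$k + w$k")
      case True then show ?thesis by (simp add: G1_def G2_def eta_def tk_def div indicator_def)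
    next
      case False then show ?thesis by (simp add: G1_def G2_def eta_neg tk_def div indicator_def)
    qed
  qed
  also have "\<dots> = (\<integral>w. G1 w \<partial>lborel) + (\<integral>w. G2 w \<partial>lborel)"
    by (rule Bochner_Integration.integral_add[OF iG1 iG2])
  finally have L2: "(LINT w:{w. \<epsilon> < norm w}|lborel. (\<psi> x - \<psi> (eta k x w)) / norm w powr a)
      = (\<integral>w. G1 w \<partial>lborel) + (\<integral>w. G2 w \<partial>lborel)" .
  define P1 where "P1 y = indicator (halfspace k) y * ((\<psi> x - \<psi> y) * tk a \<epsilon> (x - y))" for y
  define P2 where "P2 y = indicator (halfspace k) y * ((\<psi> x - \<psi> y) * tk a \<epsilon> (x - reflect k y))" for y
  have [measurable]: "halfspace k \<in> sets borel"
    unfolding halfspace_def by measurable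
  have [measurable]: "P1 \<in> borel_measurable borel" "P2 \<in> borel_measurable borel"
    unfolding P1_def[abs_def] P2_def[abs_def] by measurable
  have e1: "(\<integral>w. G1 w \<partial>lborel) = (\<integral>y. P1 y \<partial>lborel)"
  proof -
    have "(\<integral>w. G1 w \<partial>lborel) = (\<integral>y. G1 (- x + y) \<partial>lborel)"
      by (rule integral_shift[symmetric]) simp
    also have "\<dots> = (\<integral>y. P1 y \<partial>lborel)"
    proof (intro Bochner_Integration.integral_cong refl)
      fix y :: "real^'n"
      have "tk a \<epsilon> (- x + y) = tk a \<epsilon> (x - y)" by (rule tk_diff_swap)
      then show "G1 (- x + y) = P1 y"
        by (simp add: G1_def P1_def halfspace_def indicator_def)
    qed
    finally show ?thesis .
  qed
  have e2: "(\<integral>w. G2 w \<partial>lborel) = (\<integral>y. P2 y \<partial>lborel)"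
  proof -
    have "(\<integral>w. G2 w \<partial>lborel) = (\<integral>y. G2 (- x + y) \<partial>lborel)"
      by (rule integral_shift[symmetric]) simp
    also have "\<dots> = (\<integral>y. G2 (- x + reflect k y) \<partial>lborel)"
      by (rule integral_reflect[where g="\<lambda>y. G2 (- x + y)", symmetric]) simp
    also have "\<dots> = (\<integral>y. P2 y \<partial>lborel)"
    proof (intro integral_cong_AE)
      show "AE y in lborel. G2 (- x + reflect k y) = P2 y"
        using AE_not_hyper[of k]
      proof eventually_elim
        fix y :: "real^'n" assume y: "y $ k \<noteq> 0"
        have "tk a \<epsilon> (- x + reflect k y) = tk a \<epsilon> (x - reflect k y)"
          by (rule tk_diff_swap)
        then show "G2 (- x + reflect k y) = P2 y"
          using y by (auto simp: G2_def P2_def halfspace_def indicator_def reflect_nth)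
      qed
    qed simp_all
    finally show ?thesis .
  qed
  have iP1: "integrable lborel P1"
  proof (rule Bochner_Integration.integrable_bound)
    show "integrable lborel (\<lambda>y. 2 * M * tk a \<epsilon> (x - y))"
      using tk_shift_integrable(1)[OF a e, of x] by simp
    show "AE y in lborel. norm (P1 y) \<le> norm (2 * M * tk a \<epsilon> (x - y))"
      by (intro AE_I2) (auto simp: P1_def abs_mult indicator_def M3)
  qed simp
  have iP2: "integrable lborel P2"
  proof (rule Bochner_Integration.integrable_bound)
    show "integrable lborel (\<lambda>y. 2 * M * tk a \<epsilon> (x - reflect k y))"
      using tk_shift_integrable(2)[OF a e, of x k] by simp
    show "AE y in lborel. norm (P2 y) \<le> norm (2 * M * tk a \<epsilon> (x - reflect k y))"
      by (intro AE_I2) (auto simp: P2_def abs_mult indicator_def M3)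
  qed simp
  have "(LINT y:halfspace k|lborel. (\<psi> x - \<psi> y) * (tk a \<epsilon> (x - y) + tk a \<epsilon> (x - reflect k y)))
     = (\<integral>y. P1 y + P2 y \<partial>lborel)"
    unfolding set_lebesgue_integral_def
    by (intro Bochner_Integration.integral_cong refl) (simp add: P1_def P2_def algebra_simps)
  also have "\<dots> = (\<integral>y. P1 y \<partial>lborel) + (\<integral>y. P2 y \<partial>lborel)"
    by (rule Bochner_Integration.integral_add[OF iP1 iP2])
  finally show ?thesis using L2 e1 e2 by simp
qed


lemma norm_powr_measurable[measurable]:
  "(\<lambda>x::'a::euclidean_space. norm x powr b) \<in> borel_measurable borel"
  by (intro powr_real_measurable) auto

lemma ball_sets_borel[measurable]: "ball (c::'a::euclidean_space) r \<in> sets borel"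
  by (simp add: borel_open)

lemma integrable_from_nn:
  fixes f :: "real^'n::finite \<Rightarrow> real"
  assumes [measurable]: "f \<in> borel_measurable borel" and "\<And>w. f w \<ge> 0" and "(\<integral>\<^sup>+w. ennreal (f w) \<partial>lborel) < \<infinity>"
  shows "integrable lborel f"
  by (rule integrableI_bounded) (use assms in auto)

lemma integrable_ball_pow:
  assumes b: "b > - real CARD('n::finite)"
  shows "integrable lborel (\<lambda>w::real^'n. indicator (ball 0 R) w * norm w powr b)"
proof (rule integrable_from_nn)
  show "(\<lambda>w::real^'n. indicator (ball 0 R) w * norm w powr b) \<in> borel_measurable borel" by measurable
  show "\<And>w. 0 \<le> indicator (ball 0 R) w * norm (w::real^'n) powr b" by simp
  have "(\<integral>\<^sup>+w. ennreal (indicator (ball 0 R) w * norm (w::real^'n) powr b) \<partial>lborel)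
      = (\<integral>\<^sup>+w. indicator (ball 0 R) w * ennreal (norm (w::real^'n) powr b) \<partial>lborel)"
    by (intro nn_integral_cong) (simp add: indicator_def)
  also have "\<dots> < \<infinity>" by (rule radial_ball) (use b in simp)
  finally show "(\<integral>\<^sup>+w. ennreal (indicator (ball 0 R) w * norm (w::real^'n) powr b) \<partial>lborel) < \<infinity>" .
qed

lemma integrable_tail_pow:
  assumes b: "b < - real CARD('n::finite)" and r: "\<rho> > 0"
  shows "integrable lborel (\<lambda>w::real^'n. indicator {w. \<rho> \<le> norm w} w * norm w powr b)"
proof (rule integrable_from_nn)
  show "(\<lambda>w::real^'n. indicator {w. \<rho> \<le> norm w} w * norm w powr b) \<in> borel_measurable borel" by measurable
  show "\<And>w. 0 \<le> indicator {w. \<rho> \<le> norm w} w * norm (w::real^'n) powr b" by simp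
  have "(\<integral>\<^sup>+w. ennreal (indicator {w. \<rho> \<le> norm w} w * norm (w::real^'n) powr b) \<partial>lborel)
      = (\<integral>\<^sup>+w. indicator {w. \<rho> \<le> norm w} w * ennreal (norm (w::real^'n) powr b) \<partial>lborel)"
    by (intro nn_integral_cong) (simp add: indicator_def)
  also have "\<dots> < \<infinity>" by (rule radial_tail) (use b r in simp_all)
  finally show "(\<integral>\<^sup>+w. ennreal (indicator {w. \<rho> \<le> norm w} w * norm (w::real^'n) powr b) \<partial>lborel) < \<infinity>" .
qed

definition f0 :: "real \<Rightarrow> real \<Rightarrow> real^'n::finite \<Rightarrow> real" where
  "f0 a s w = indicator (ball 0 1) w * norm w powr (1 + s - a) + indicator {w. 1 \<le> norm w} w * norm w powr (- a)"

lemma f0_measurable[measurable]: "f0 a s \<in> borel_measurable borel"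
  unfolding f0_def by measurable

lemma f0_nonneg: "f0 a s w \<ge> 0" by (simp add: f0_def)

lemma f0_integrable:
  assumes "a = real CARD('n::finite) + 2 * s" "0 < s" "s < 1"
  shows "integrable lborel (f0 a s :: real^'n \<Rightarrow> real)"
  unfolding f0_def[abs_def]
  by (intro Bochner_Integration.integrable_add integrable_ball_pow integrable_tail_pow) (use assms in auto)

lemma f0_bound:
  fixes \<psi> :: "real^'n::finite \<Rightarrow> real"
  assumes M: "\<And>z. \<bar>\<psi> z\<bar> \<le> M" and L: "\<And>u v. \<bar>\<psi> u - \<psi> v\<bar> \<le> L * norm (u - v)" and L0: "L \<ge> 0"
    and s: "0 < s" and x: "x $ k > 0" and tw: "x $ k \<le> norm w"
  shows "\<bar>\<psi> x - \<psi> (eta k x w)\<bar> * norm w powr (-a) \<le> (L * (x $ k) powr (-s) + 2 * M) * f0 a s w"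
proof -
  define t where "t = x $ k"
  have t: "t > 0" "t \<le> norm w" using x tw by (auto simp: t_def)
  have wpos: "norm w > 0" using t by linarith
  have M0: "M \<ge> 0" using M[of x] by linarith
  have d1: "\<bar>\<psi> x - \<psi> (eta k x w)\<bar> \<le> L * norm w"
  proof -
    have "\<bar>\<psi> x - \<psi> (eta k x w)\<bar> = \<bar>\<psi> (eta k x w) - \<psi> x\<bar>" by simp
    also have "\<dots> \<le> L * norm (eta k x w - x)" by (rule L)
    also have "\<dots> \<le> L * norm w" using eta_dist_le[OF x] L0 by (intro mult_left_mono) auto
    finally show ?thesis .
  qed
  have d2: "\<bar>\<psi> x - \<psi> (eta k x w)\<bar> \<le> 2 * M" using M[of x] M[of "eta k x w"] by linarith
  have tp: "t powr (-s) > 0" using t by simp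
  show ?thesis
  proof (cases "norm w < 1")
    case True
    have "\<bar>\<psi> x - \<psi> (eta k x w)\<bar> * norm w powr (-a) \<le> L * norm w * norm w powr (-a)"
      using d1 by (intro mult_right_mono) auto
    also have "L * norm w * norm w powr (-a) = L * (norm w powr (-s) * norm w powr (1 + s - a))"
      using wpos by (simp add: powr_add[symmetric] powr_mult_base)
    also have "\<dots> \<le> L * (t powr (-s) * norm w powr (1 + s - a))"
      using t s L0 by (intro mult_left_mono mult_right_mono powr_mono2') auto
    also have "\<dots> \<le> (L * t powr (-s) + 2 * M) * (norm w powr (1 + s - a))"
      using M0 by (simp add: algebra_simps)
    also have "\<dots> \<le> (L * t powr (-s) + 2 * M) * f0 a s w"
      using True M0 L0 tp by (intro mult_left_mono) (auto simp: f0_def indicator_def)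
    finally show ?thesis by (simp add: t_def)
  next
    case False
    have "\<bar>\<psi> x - \<psi> (eta k x w)\<bar> * norm w powr (-a) \<le> 2 * M * norm w powr (-a)"
      using d2 by (intro mult_right_mono) auto
    also have "\<dots> \<le> (L * t powr (-s) + 2 * M) * norm w powr (-a)"
      using L0 tp by (intro mult_right_mono) auto
    also have "\<dots> = (L * t powr (-s) + 2 * M) * f0 a s w"
      using False by (simp add: f0_def indicator_def)
    finally show ?thesis by (simp add: t_def)
  qed
qed


definition Tt :: "real \<Rightarrow> 'n::finite \<Rightarrow> (real^'n \<Rightarrow> real) \<Rightarrow> real \<Rightarrow> real^'n \<Rightarrow> real" where
  "Tt a k \<psi> \<epsilon> x = (LINT w:{w. \<epsilon> < norm w}|lborel. (\<psi> x - \<psi> (eta k x w)) / norm w powr a)"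

lemma int_norm_le:
  fixes f g :: "'a \<Rightarrow> real"
  assumes "integrable M f" "integrable M g" "\<And>x. norm (f x) \<le> g x"
  shows "norm (integral\<^sup>L M f) \<le> integral\<^sup>L M g"
proof -
  have "norm (integral\<^sup>L M f) \<le> (\<integral>x. norm (f x) \<partial>M)" by (rule integral_norm_bound)
  also have "\<dots> \<le> integral\<^sup>L M g"
    by (intro integral_mono integrable_norm assms)
  finally show ?thesis .
qed

lemma div_powr_eq: "t / norm w powr a = t * norm w powr (-a)"
  by (simp add: powr_minus divide_inverse)

locale stepB =
  fixes \<psi> :: "real^'n::finite \<Rightarrow> real" and M L B s a :: real and k :: 'n and x :: "real^'n"
  assumes meas[measurable]: "\<psi> \<in> borel_measurable borel"
    and M: "\<And>z. \<bar>\<psi> z\<bar> \<le> M"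
    and L: "\<And>u v. \<bar>\<psi> u - \<psi> v\<bar> \<le> L * norm (u - v)" and L0: "L \<ge> 0"
    and B: "\<And>z w. \<bar>2 * \<psi> z - \<psi> (z + w) - \<psi> (z - w)\<bar> \<le> B * (norm w)\<^sup>2" and B0: "B \<ge> 0"
    and s: "0 < s" "s < 1" and a: "a = real CARD('n) + 2 * s"
    and x: "x $ k > 0"
begin

definition "t = x $ k"
definition "Sf w = (\<psi> x - (\<psi> (x + w) + \<psi> (x - w)) / 2) * norm w powr (-a)"
definition "Af \<epsilon> w = (if \<epsilon> < norm w \<and> norm w < t then Sf w else 0)"
definition "Qf w = (if t \<le> norm w then (\<psi> x - \<psi> (eta k x w)) * norm w powr (-a) else 0)"

lemma t_pos: "t > 0" using x by (simp add: t_def)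

lemma M0: "M \<ge> 0" using M[of x] by linarith

lemma cst_nonneg: "L * t powr (-s) + 2 * M \<ge> 0"
  using L0 M0 by simp

lemma Sf_meas[measurable]: "Sf \<in> borel_measurable borel"
  unfolding Sf_def[abs_def] by measurable
lemma Af_meas[measurable]: "Af \<epsilon> \<in> borel_measurable borel"
  unfolding Af_def[abs_def] by measurable
lemma Qf_meas[measurable]: "Qf \<in> borel_measurable borel"
  unfolding Qf_def[abs_def] by measurable

lemma Sf_bound: "\<bar>Sf w\<bar> \<le> B / 2 * norm w powr (2 - a)"
proof (cases "w = 0")
  case True then show ?thesis by (simp add: Sf_def)
next
  case False
  have "\<psi> x - (\<psi> (x + w) + \<psi> (x - w)) / 2 = (2 * \<psi> x - \<psi> (x + w) - \<psi> (x - w)) / 2"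
    by (simp add: field_simps)
  then have "\<bar>\<psi> x - (\<psi> (x + w) + \<psi> (x - w)) / 2\<bar> = \<bar>2 * \<psi> x - \<psi> (x + w) - \<psi> (x - w)\<bar> / 2"
    by (simp only: abs_divide)
  also have "\<dots> \<le> B * (norm w)\<^sup>2 / 2" using B[of x w] by simp
  finally have h: "\<bar>\<psi> x - (\<psi> (x + w) + \<psi> (x - w)) / 2\<bar> \<le> B * (norm w)\<^sup>2 / 2" .
  have "\<bar>Sf w\<bar> \<le> B * (norm w)\<^sup>2 / 2 * norm w powr (-a)"
  proof -
    have "\<bar>Sf w\<bar> = \<bar>\<psi> x - (\<psi> (x + w) + \<psi> (x - w)) / 2\<bar> * norm w powr (-a)"
      by (simp add: Sf_def abs_mult)
    also have "\<dots> \<le> B * (norm w)\<^sup>2 / 2 * norm w powr (-a)"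
      by (rule mult_right_mono[OF h]) simp
    finally show ?thesis .
  qed
  also have "B * (norm w)\<^sup>2 / 2 * norm w powr (-a) = B / 2 * ((norm w)\<^sup>2 * norm w powr (-a))"
    by simp
  also have "(norm w)\<^sup>2 * norm w powr (-a) = norm w powr (2 - a)"
  proof -
    have "norm w powr (2 - a) = norm w powr 2 * norm w powr (-a)"
      using powr_add[of "norm w" 2 "-a"] by simp
    also have "norm w powr 2 = (norm w)\<^sup>2" using False by (simp add: powr_numeral)
    finally show ?thesis by simp
  qed
  finally show ?thesis .
qed

lemma Af_bound:
  assumes "t \<le> R" shows "\<bar>Af \<epsilon> w\<bar> \<le> B / 2 * (indicator (ball 0 R) w * norm w powr (2 - a))"
  using Sf_bound[of w] assms B0 by (auto simp: Af_def indicator_def)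

lemma Af_dom_int: "integrable lborel (\<lambda>w. B / 2 * (indicator (ball 0 R) w * norm (w::real^'n) powr (2 - a)))"
  by (intro integrable_mult_right integrable_ball_pow) (use a s in simp)

lemma Af_int: "integrable lborel (Af \<epsilon>)"
  by (rule Bochner_Integration.integrable_bound[OF Af_dom_int[of t]])
     (use Af_bound[of t] B0 in \<open>auto intro!: AE_I2 simp: abs_mult\<close>)

lemma Qf_dom: "\<bar>Qf w\<bar> \<le> (L * t powr (-s) + 2 * M) * f0 a s w"
proof (cases "t \<le> norm w")
  case True
  have "\<bar>Qf w\<bar> = \<bar>\<psi> x - \<psi> (eta k x w)\<bar> * norm w powr (-a)"
    using True by (simp add: Qf_def abs_mult)
  also have "\<dots> \<le> (L * t powr (-s) + 2 * M) * f0 a s w"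
    unfolding t_def by (rule f0_bound[OF M L L0 s(1) x]) (use True in \<open>simp add: t_def\<close>)
  finally show ?thesis .
next
  case False
  have "0 \<le> (L * t powr (-s) + 2 * M) * f0 a s w"
    using L0 M0 f0_nonneg by (intro mult_nonneg_nonneg) auto
  then show ?thesis using False by (simp add: Qf_def)
qed

lemma f0_int: "integrable lborel (f0 a s :: real^'n \<Rightarrow> real)"
  by (rule f0_integrable) (use a s in auto)

lemma Qf_int: "integrable lborel Qf"
  by (rule Bochner_Integration.integrable_bound[OF integrable_mult_right[OF f0_int, of "L * t powr (-s) + 2 * M"]])
     (use Qf_dom cst_nonneg in \<open>auto intro!: AE_I2 simp: abs_mult f0_nonneg\<close>)

lemma decomp:
  assumes e: "0 < \<epsilon>" "\<epsilon> < t"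
  shows "Tt a k \<psi> \<epsilon> x = (\<integral>w. Af \<epsilon> w \<partial>lborel) + (\<integral>w. Qf w \<partial>lborel)"
proof -
  define P where "P w = (if \<epsilon> < norm w \<and> norm w < t then (\<psi> x - \<psi> (x + w)) * norm w powr (-a) else 0)" for w
  have [measurable]: "P \<in> borel_measurable borel" unfolding P_def[abs_def] by measurable
  have Pb: "\<bar>P w\<bar> \<le> 2 * M * tk a \<epsilon> w" for w
  proof -
    have "\<bar>\<psi> x - \<psi> (x + w)\<bar> \<le> 2 * M" using M[of x] M[of "x + w"] by linarith
    then show ?thesis by (auto simp: P_def tk_def abs_mult intro!: mult_right_mono)
  qed
  have Pint: "integrable lborel P"
  proof (rule Bochner_Integration.integrable_bound)
    show "integrable lborel (\<lambda>w::real^'n. 2 * M * tk a \<epsilon> w)"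
      by (rule integrable_mult_right, rule tk_integrable) (use a s e in auto)
    show "AE w in lborel. norm (P w) \<le> norm (2 * M * tk a \<epsilon> w)"
      using Pb M0 by (intro AE_I2) (auto simp: abs_mult abs_of_nonneg[OF tk_nonneg])
  qed simp
  have "Tt a k \<psi> \<epsilon> x = (\<integral>w. P w + Qf w \<partial>lborel)"
    unfolding Tt_def set_lebesgue_integral_def
  proof (intro Bochner_Integration.integral_cong refl)
    fix w :: "real^'n"
    show "indicator {w. \<epsilon> < norm w} w *\<^sub>R ((\<psi> x - \<psi> (eta k x w)) / norm w powr a) = P w + Qf w"
    proof (cases "norm w < t")
      case True
      then have "eta k x w = x + w" using eta_small[of w x k] by (simp add: t_def)
      then show ?thesis using True by (auto simp: P_def Qf_def div_powr_eq indicator_def)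
    next
      case False
      then show ?thesis using e by (auto simp: P_def Qf_def div_powr_eq indicator_def)
    qed
  qed
  also have "\<dots> = (\<integral>w. P w \<partial>lborel) + (\<integral>w. Qf w \<partial>lborel)"
    by (rule Bochner_Integration.integral_add[OF Pint Qf_int])
  also have "(\<integral>w. P w \<partial>lborel) = (\<integral>w. Af \<epsilon> w \<partial>lborel)"
  proof -
    have neg: "(\<integral>w. P (- w) \<partial>lborel) = (\<integral>w. P w \<partial>lborel)" by (rule integral_uminus) simp
    have Pint': "integrable lborel (\<lambda>w. P (- w))" using Pint by (subst integrable_uminus) auto
    have "(\<integral>w. Af \<epsilon> w \<partial>lborel) = (\<integral>w. (P w + P (- w)) / 2 \<partial>lborel)"
    proof (intro Bochner_Integration.integral_cong refl)
      fix w :: "real^'n"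
      show "Af \<epsilon> w = (P w + P (- w)) / 2"
        by (auto simp: Af_def Sf_def P_def field_simps)
    qed
    also have "\<dots> = ((\<integral>w. P w \<partial>lborel) + (\<integral>w. P (- w) \<partial>lborel)) / 2"
      by (simp add: Bochner_Integration.integral_add[OF Pint Pint'])
    finally show ?thesis using neg by simp
  qed
  finally show ?thesis .
qed

lemma Af_lim: "((\<lambda>\<epsilon>. \<integral>w. Af \<epsilon> w \<partial>lborel) \<longlongrightarrow> (\<integral>w. Af 0 w \<partial>lborel)) (at_right 0)"
proof (subst tendsto_at_iff_sequentially, intro allI impI)
  fix X :: "nat \<Rightarrow> real" assume X: "\<forall>i. X i \<in> {0<..} - {0}" and X0: "X \<longlonglongrightarrow> 0"
  show "((\<lambda>\<epsilon>. \<integral>w. Af \<epsilon> w \<partial>lborel) \<circ> X) \<longlonglongrightarrow> (\<integral>w. Af 0 w \<partial>lborel)"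
    unfolding comp_def
  proof (rule integral_dominated_convergence[OF _ _ Af_dom_int[of t]])
    show "Af 0 \<in> borel_measurable lborel" by simp
    show "\<And>i. Af (X i) \<in> borel_measurable lborel" by simp
    show "AE w in lborel. norm (Af (X i) w) \<le> B / 2 * (indicator (ball 0 t) w * norm w powr (2 - a))" for i
      using Af_bound[of t] by (intro AE_I2) auto
    show "AE w in lborel. (\<lambda>i. Af (X i) w) \<longlonglongrightarrow> Af 0 w"
    proof (intro AE_I2)
      fix w :: "real^'n"
      show "(\<lambda>i. Af (X i) w) \<longlonglongrightarrow> Af 0 w"
      proof (cases "0 < norm w")
        case True
        have "eventually (\<lambda>i. X i < norm w) sequentially"
          using order_tendstoD(2)[OF X0 True] .
        then have "eventually (\<lambda>i. Af (X i) w = Af 0 w) sequentially"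
          by eventually_elim (use True in \<open>auto simp: Af_def\<close>)
        then show ?thesis by (rule tendsto_eventually)
      next
        case False
        then have "Af (X i) w = Af 0 w" for i using X by (auto simp: Af_def Sf_def)
        then show ?thesis by simp
      qed
    qed
  qed
qed

lemma Tt_lim: "((\<lambda>\<epsilon>. Tt a k \<psi> \<epsilon> x) \<longlongrightarrow> (\<integral>w. Af 0 w \<partial>lborel) + (\<integral>w. Qf w \<partial>lborel)) (at_right 0)"
proof (rule Lim_transform_eventually)
  show "((\<lambda>\<epsilon>. (\<integral>w. Af \<epsilon> w \<partial>lborel) + (\<integral>w. Qf w \<partial>lborel)) \<longlongrightarrow> (\<integral>w. Af 0 w \<partial>lborel) + (\<integral>w. Qf w \<partial>lborel)) (at_right 0)"
    by (intro tendsto_add Af_lim tendsto_const)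
  show "\<forall>\<^sub>F \<epsilon> in at_right 0. (\<integral>w. Af \<epsilon> w \<partial>lborel) + (\<integral>w. Qf w \<partial>lborel) = Tt a k \<psi> \<epsilon> x"
    using eventually_at_right_real[OF t_pos] by eventually_elim (simp add: decomp)
qed

lemma Tt_bound:
  assumes e: "\<epsilon> > 0" and R: "t \<le> R"
  shows "\<bar>Tt a k \<psi> \<epsilon> x\<bar> \<le> B / 2 * (\<integral>w. indicator (ball 0 R) w * norm (w::real^'n) powr (2 - a) \<partial>lborel)
             + (L * t powr (-s) + 2 * M) * (\<integral>w. f0 a s (w::real^'n) \<partial>lborel)"
proof -
  have f0i: "(\<integral>w. f0 a s (w::real^'n) \<partial>lborel) \<ge> 0" by (intro integral_nonneg_AE) (simp add: f0_nonneg)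
  have I2: "(\<integral>w. indicator (ball 0 R) w * norm (w::real^'n) powr (2 - a) \<partial>lborel) \<ge> 0"
    by (intro integral_nonneg_AE) simp
  have Qb: "\<bar>\<integral>w. Qf w \<partial>lborel\<bar> \<le> (L * t powr (-s) + 2 * M) * (\<integral>w. f0 a s (w::real^'n) \<partial>lborel)"
  proof -
    have "norm (\<integral>w. Qf w \<partial>lborel) \<le> (\<integral>w. (L * t powr (-s) + 2 * M) * f0 a s (w::real^'n) \<partial>lborel)"
      by (rule int_norm_le)
         (use Qf_int f0_int Qf_dom in auto)
    then show ?thesis by simp
  qed
  show ?thesis
  proof (cases "\<epsilon> < t")
    case True
    have Ab: "\<bar>\<integral>w. Af \<epsilon> w \<partial>lborel\<bar> \<le> B / 2 * (\<integral>w. indicator (ball 0 R) w * norm (w::real^'n) powr (2 - a) \<partial>lborel)"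
    proof -
      have "norm (\<integral>w. Af \<epsilon> w \<partial>lborel) \<le> (\<integral>w. B / 2 * (indicator (ball 0 R) w * norm (w::real^'n) powr (2 - a)) \<partial>lborel)"
        by (rule int_norm_le)
           (use Af_int Af_dom_int Af_bound[OF R] in auto)
      then show ?thesis by simp
    qed
    show ?thesis using decomp[OF e True] Ab Qb by linarith
  next
    case False
    define Q2 where "Q2 w = (if \<epsilon> < norm w then (\<psi> x - \<psi> (eta k x w)) * norm w powr (-a) else 0)" for w
    have [measurable]: "Q2 \<in> borel_measurable borel" unfolding Q2_def[abs_def] by measurable
    have Q2d: "\<bar>Q2 w\<bar> \<le> (L * t powr (-s) + 2 * M) * f0 a s w" for w
    proof (cases "\<epsilon> < norm w")
      case True
      then have "Q2 w = Qf w" using False by (simp add: Q2_def Qf_def)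
      then show ?thesis using Qf_dom[of w] by simp
    next
      case False
      have "0 \<le> (L * t powr (-s) + 2 * M) * f0 a s w"
        using L0 M0 f0_nonneg by (intro mult_nonneg_nonneg) auto
      then show ?thesis using False by (simp add: Q2_def)
    qed
    have Q2i: "integrable lborel Q2"
      by (rule Bochner_Integration.integrable_bound[OF integrable_mult_right[OF f0_int, of "L * t powr (-s) + 2 * M"]])
         (use Q2d cst_nonneg in \<open>auto intro!: AE_I2 simp: abs_mult f0_nonneg\<close>)
    have "Tt a k \<psi> \<epsilon> x = (\<integral>w. Q2 w \<partial>lborel)"
      unfolding Tt_def set_lebesgue_integral_def
      by (intro Bochner_Integration.integral_cong refl) (auto simp: Q2_def div_powr_eq indicator_def)
    moreover have "norm (\<integral>w. Q2 w \<partial>lborel) \<le> (\<integral>w. (L * t powr (-s) + 2 * M) * f0 a s (w::real^'n) \<partial>lborel)"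
      by (rule int_norm_le)
         (use Q2i f0_int Q2d in auto)
    ultimately show ?thesis using I2 B0 by (simp add: mult_nonneg_nonneg add_increasing)
  qed
qed

end


definition Ke :: "real \<Rightarrow> 'n::finite \<Rightarrow> real \<Rightarrow> real^'n \<Rightarrow> real^'n \<Rightarrow> real" where
  "Ke a k \<epsilon> x y = tk a \<epsilon> (x - y) + tk a \<epsilon> (x - reflect k y)"

lemma Ke_sym: "Ke a k \<epsilon> x y = Ke a k \<epsilon> y x"
  unfolding Ke_def tk_def by (simp add: norm_minus_commute norm_diff_reflect_swap[of x k y])

lemma Ke_nonneg: "Ke a k \<epsilon> x y \<ge> 0" by (simp add: Ke_def tk_nonneg)

lemma halfspace_borel[measurable]: "halfspace k \<in> sets borel"
  unfolding halfspace_def by measurable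

lemma tk_pair_meas[measurable]: "(\<lambda>z. tk a \<epsilon> (fst z - snd z)) \<in> borel_measurable (lborel \<Otimes>\<^sub>M lborel)"
  by measurable

lemma pair_int_ball_tk:
  assumes a: "a > real CARD('n::finite)" and e: "\<epsilon> > 0"
  shows "integrable (lborel \<Otimes>\<^sub>M lborel) (\<lambda>z. indicator (ball 0 R) (fst z) * tk a \<epsilon> (fst z - snd z :: real^'n))"
    and "integrable (lborel \<Otimes>\<^sub>M lborel) (\<lambda>z. indicator (ball 0 R) (fst z) * tk a \<epsilon> (fst z - reflect k (snd z) :: real^'n))"
proof -
  have ti: "integrable lborel (tk a \<epsilon> :: real^'n \<Rightarrow> real)" by (rule tk_integrable[OF a e])
  then have C: "(\<integral>\<^sup>+w. ennreal (tk a \<epsilon> (w::real^'n)) \<partial>lborel) < \<infinity>"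
    unfolding integrable_iff_bounded by (simp add: tk_nonneg)
  have inner1: "(\<integral>\<^sup>+y. ennreal (tk a \<epsilon> (x - y :: real^'n)) \<partial>lborel) = (\<integral>\<^sup>+w. ennreal (tk a \<epsilon> (w::real^'n)) \<partial>lborel)" for x :: "real^'n"
  proof -
    have "(\<integral>\<^sup>+y. ennreal (tk a \<epsilon> (x - y :: real^'n)) \<partial>lborel) = (\<integral>\<^sup>+y. ennreal (tk a \<epsilon> (- x + y :: real^'n)) \<partial>lborel)"
      by (simp only: tk_diff_swap)
    also have "\<dots> = (\<integral>\<^sup>+w. ennreal (tk a \<epsilon> (w::real^'n)) \<partial>lborel)"
      by (rule nn_integral_shift[where g="\<lambda>w. ennreal (tk a \<epsilon> w)"]) simp
    finally show ?thesis .
  qed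
  have inner2: "(\<integral>\<^sup>+y. ennreal (tk a \<epsilon> (x - reflect k y :: real^'n)) \<partial>lborel) = (\<integral>\<^sup>+w. ennreal (tk a \<epsilon> (w::real^'n)) \<partial>lborel)" for x :: "real^'n"
  proof -
    have "(\<integral>\<^sup>+y. ennreal (tk a \<epsilon> (x - reflect k y :: real^'n)) \<partial>lborel) = (\<integral>\<^sup>+y. ennreal (tk a \<epsilon> (x - y :: real^'n)) \<partial>lborel)"
      by (rule nn_integral_reflect[where g="\<lambda>y. ennreal (tk a \<epsilon> (x - y))"]) simp
    then show ?thesis using inner1 by simp
  qed
  have gen: "integrable (lborel \<Otimes>\<^sub>M lborel) (\<lambda>z. indicator (ball 0 R) (fst z) * g (fst z) (snd z))"
    if gm[measurable]: "(\<lambda>z. g (fst z) (snd z)) \<in> borel_measurable (lborel \<Otimes>\<^sub>M lborel)"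
      and gn: "\<And>x y. g x y \<ge> 0"
      and gi: "\<And>x. (\<integral>\<^sup>+y. ennreal (g x y) \<partial>lborel) = (\<integral>\<^sup>+w. ennreal (tk a \<epsilon> (w::real^'n)) \<partial>lborel)"
    for g :: "real^'n \<Rightarrow> real^'n \<Rightarrow> real"
  proof (rule integrableI_bounded)
    show "(\<lambda>z. indicator (ball 0 R) (fst z) * g (fst z) (snd z)) \<in> borel_measurable (lborel \<Otimes>\<^sub>M lborel)"
      by measurable
    have "(\<integral>\<^sup>+z. ennreal (norm (indicator (ball 0 R) (fst z) * g (fst z) (snd z))) \<partial>(lborel \<Otimes>\<^sub>M lborel))
        = (\<integral>\<^sup>+x. \<integral>\<^sup>+y. ennreal (indicator (ball 0 R) x * g x y) \<partial>lborel \<partial>lborel)"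
      by (subst lborel.nn_integral_fst[symmetric]) (auto simp: gn)
    also have "\<dots> = (\<integral>\<^sup>+x. indicator (ball 0 R) (x::real^'n) * (\<integral>\<^sup>+w. ennreal (tk a \<epsilon> (w::real^'n)) \<partial>lborel) \<partial>lborel)"
    proof (intro nn_integral_cong)
      fix x :: "real^'n"
      show "(\<integral>\<^sup>+y. ennreal (indicator (ball 0 R) x * g x y) \<partial>lborel) = indicator (ball 0 R) x * (\<integral>\<^sup>+w. ennreal (tk a \<epsilon> (w::real^'n)) \<partial>lborel)"
        by (cases "x \<in> ball 0 R") (simp_all add: gi)
    qed
    also have "\<dots> = (\<integral>\<^sup>+w. ennreal (tk a \<epsilon> (w::real^'n)) \<partial>lborel) * emeasure lborel (ball (0::real^'n) R)"
      by (subst nn_integral_multc) (auto simp: mult.commute)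
    also have "\<dots> < \<infinity>"
      using C emeasure_lborel_ball_finite[of "0::real^'n" R] by (simp add: ennreal_mult_less_top)
    finally show "(\<integral>\<^sup>+z. ennreal (norm (indicator (ball 0 R) (fst z) * g (fst z) (snd z))) \<partial>(lborel \<Otimes>\<^sub>M lborel)) < \<infinity>" .
  qed
  show "integrable (lborel \<Otimes>\<^sub>M lborel) (\<lambda>z. indicator (ball 0 R) (fst z) * tk a \<epsilon> (fst z - snd z :: real^'n))"
    by (rule gen[where g="\<lambda>x y. tk a \<epsilon> (x - y)"]) (auto simp: tk_nonneg inner1)
  show "integrable (lborel \<Otimes>\<^sub>M lborel) (\<lambda>z. indicator (ball 0 R) (fst z) * tk a \<epsilon> (fst z - reflect k (snd z) :: real^'n))"
    by (rule gen[where g="\<lambda>x y. tk a \<epsilon> (x - reflect k y)"]) (auto simp: tk_nonneg inner2)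
qed


lemma Ke_pair_meas[measurable]:
  "(\<lambda>z. Ke a k \<epsilon> (fst z) (snd z)) \<in> borel_measurable (lborel \<Otimes>\<^sub>M lborel)"
  unfolding Ke_def by measurable

lemma stepC:
  fixes \<phi> \<psi> :: "real^'n::finite \<Rightarrow> real" and k :: 'n
  assumes [measurable]: "\<phi> \<in> borel_measurable borel" "\<psi> \<in> borel_measurable borel"
    and Mp: "\<And>z. \<bar>\<phi> z\<bar> \<le> Mp" and Mq: "\<And>z. \<bar>\<psi> z\<bar> \<le> Mq" and R: "\<And>z. \<phi> z \<noteq> 0 \<Longrightarrow> norm z < R"
    and a: "a > real CARD('n)" and e: "\<epsilon> > 0"
  shows "(LINT x:halfspace k|lborel. \<phi> x * Tt a k \<psi> \<epsilon> x)
     = 1/2 * (LINT x:halfspace k|lborel. LINT y:halfspace k|lborel. (\<phi> x - \<phi> y) * (\<psi> x - \<psi> y) * Ke a k \<epsilon> x y)"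
proof -
  let ?H = "halfspace k"
  define \<Phi> where "\<Phi> z = indicator ?H (fst z) * indicator ?H (snd z) * (\<phi> (fst z) * ((\<psi> (fst z) - \<psi> (snd z)) * Ke a k \<epsilon> (fst z) (snd z)))" for z :: "(real^'n) \<times> (real^'n)"
  define \<Phi>' where "\<Phi>' z = indicator ?H (fst z) * indicator ?H (snd z) * (- (\<phi> (snd z) * ((\<psi> (fst z) - \<psi> (snd z)) * Ke a k \<epsilon> (fst z) (snd z))))" for z :: "(real^'n) \<times> (real^'n)"
  define \<Psi> where "\<Psi> z = indicator ?H (fst z) * indicator ?H (snd z) * ((\<phi> (fst z) - \<phi> (snd z)) * (\<psi> (fst z) - \<psi> (snd z)) * Ke a k \<epsilon> (fst z) (snd z))" for z :: "(real^'n) \<times> (real^'n)"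
  have [measurable]: "\<Phi> \<in> borel_measurable (lborel \<Otimes>\<^sub>M lborel)" unfolding \<Phi>_def[abs_def] by measurable
  have [measurable]: "\<Phi>' \<in> borel_measurable (lborel \<Otimes>\<^sub>M lborel)" unfolding \<Phi>'_def[abs_def] by measurable
  have Mp0: "Mp \<ge> 0" using Mp[of 0] by linarith
  have Mq0: "Mq \<ge> 0" using Mq[of 0] by linarith
  define D where "D z = Mp * (2 * Mq) * (indicator (ball 0 R) (fst z) * tk a \<epsilon> (fst z - snd z)
        + indicator (ball 0 R) (fst z) * tk a \<epsilon> (fst z - reflect k (snd z)))" for z :: "(real^'n) \<times> (real^'n)"
  have Dint: "integrable (lborel \<Otimes>\<^sub>M lborel) D"
    unfolding D_def[abs_def]
    by (intro integrable_mult_right Bochner_Integration.integrable_add pair_int_ball_tk a e)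
  have Pb: "norm (\<Phi> z) \<le> norm (D z)" for z
  proof (cases "\<phi> (fst z) = 0")
    case True then show ?thesis by (simp add: \<Phi>_def)
  next
    case False
    then have inb: "fst z \<in> ball 0 R" using R by auto
    have d: "\<bar>\<psi> (fst z) - \<psi> (snd z)\<bar> \<le> 2 * Mq" using Mq[of "fst z"] Mq[of "snd z"] by linarith
    have "\<bar>\<Phi> z\<bar> \<le> \<bar>\<phi> (fst z)\<bar> * (\<bar>\<psi> (fst z) - \<psi> (snd z)\<bar> * Ke a k \<epsilon> (fst z) (snd z))"
      by (auto simp: \<Phi>_def abs_mult indicator_def Ke_nonneg)
    also have "\<dots> \<le> Mp * (2 * Mq * Ke a k \<epsilon> (fst z) (snd z))"
      using Mp d Mq0 Mp0 Ke_nonneg[of a k \<epsilon> "fst z" "snd z"] by (intro mult_mono mult_right_mono) auto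
    also have "\<dots> = D z" using inb by (simp add: D_def Ke_def algebra_simps)
    also have "D z \<le> \<bar>D z\<bar>" by simp
    finally show ?thesis by simp
  qed
  have iP: "integrable (lborel \<Otimes>\<^sub>M lborel) \<Phi>"
    by (rule Bochner_Integration.integrable_bound[OF Dint]) (use Pb in auto)
  have swap: "\<Phi>' z = (case z of (x, y) \<Rightarrow> \<Phi> (y, x))" for z
  proof (cases z)
    case (Pair u v)
    have "Ke a k \<epsilon> v u = Ke a k \<epsilon> u v" by (rule Ke_sym)
    then show ?thesis using Pair by (simp add: \<Phi>'_def \<Phi>_def algebra_simps)
  qed
  have iP': "integrable (lborel \<Otimes>\<^sub>M lborel) \<Phi>'"
    using lborel_pair.integrable_product_swap[OF iP] by (simp add: swap[abs_def] split_beta')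
  have eP': "integral\<^sup>L (lborel \<Otimes>\<^sub>M lborel) \<Phi>' = integral\<^sup>L (lborel \<Otimes>\<^sub>M lborel) \<Phi>"
    using lborel_pair.integral_product_swap[of \<Phi>] by (simp add: swap[abs_def] split_beta')
  have PsiE: "\<Psi> z = \<Phi> z + \<Phi>' z" for z by (simp add: \<Psi>_def \<Phi>_def \<Phi>'_def algebra_simps)
  have iPsi: "integrable (lborel \<Otimes>\<^sub>M lborel) \<Psi>"
    unfolding PsiE[abs_def] using iP iP' by simp
  have ePsi: "integral\<^sup>L (lborel \<Otimes>\<^sub>M lborel) \<Psi> = 2 * integral\<^sup>L (lborel \<Otimes>\<^sub>M lborel) \<Phi>"
    unfolding PsiE[abs_def] using iP iP' eP' by simp
  have L: "(LINT x:?H|lborel. \<phi> x * Tt a k \<psi> \<epsilon> x) = (\<integral>x. (\<integral>y. \<Phi> (x, y) \<partial>lborel) \<partial>lborel)"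
    unfolding set_lebesgue_integral_def
  proof (intro Bochner_Integration.integral_cong refl)
    fix x :: "real^'n"
    show "indicator ?H x *\<^sub>R (\<phi> x * Tt a k \<psi> \<epsilon> x) = (\<integral>y. \<Phi> (x, y) \<partial>lborel)"
    proof (cases "x \<in> ?H")
      case True
      then have xk: "x $ k > 0" by (simp add: halfspace_def)
      have "Tt a k \<psi> \<epsilon> x = (LINT y:?H|lborel. (\<psi> x - \<psi> y) * Ke a k \<epsilon> x y)"
        unfolding Tt_def Ke_def by (rule stepA[OF _ Mq a e xk]) simp
      then have "\<phi> x * Tt a k \<psi> \<epsilon> x = (\<integral>y. \<phi> x * (indicator ?H y * ((\<psi> x - \<psi> y) * Ke a k \<epsilon> x y)) \<partial>lborel)"
        unfolding set_lebesgue_integral_def by simp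
      also have "\<dots> = (\<integral>y. \<Phi> (x, y) \<partial>lborel)"
        using True by (intro Bochner_Integration.integral_cong refl) (simp add: \<Phi>_def)
      finally show ?thesis using True by simp
    next
      case False then show ?thesis by (simp add: \<Phi>_def)
    qed
  qed
  have Rr: "(LINT x:?H|lborel. LINT y:?H|lborel. (\<phi> x - \<phi> y) * (\<psi> x - \<psi> y) * Ke a k \<epsilon> x y)
      = (\<integral>x. (\<integral>y. \<Psi> (x, y) \<partial>lborel) \<partial>lborel)"
    unfolding set_lebesgue_integral_def
  proof (intro Bochner_Integration.integral_cong refl)
    fix x :: "real^'n"
    show "indicator ?H x *\<^sub>R (\<integral>y. indicator ?H y *\<^sub>R ((\<phi> x - \<phi> y) * (\<psi> x - \<psi> y) * Ke a k \<epsilon> x y) \<partial>lborel)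
        = (\<integral>y. \<Psi> (x, y) \<partial>lborel)"
      by (cases "x \<in> ?H") (simp_all add: \<Psi>_def)
  qed
  show ?thesis
    unfolding L Rr lborel_pair.integral_fst'[OF iP] lborel_pair.integral_fst'[OF iPsi] ePsi by simp
qed


lemma pair_int_gen:
  fixes g :: "real^'n::finite \<Rightarrow> real"
  assumes [measurable]: "g \<in> borel_measurable borel" and gn: "\<And>w. g w \<ge> 0"
    and gi: "integrable lborel g" and ev: "\<And>w. g (- w) = g w"
  shows "integrable (lborel \<Otimes>\<^sub>M lborel) (\<lambda>z. indicator (ball 0 R) (fst z) * g (fst z - snd z))"
    and "integrable (lborel \<Otimes>\<^sub>M lborel) (\<lambda>z. indicator (ball 0 R) (snd z) * g (fst z - snd z))"
proof -
  have C: "(\<integral>\<^sup>+w. ennreal (g w) \<partial>lborel) < \<infinity>"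
    using gi unfolding integrable_iff_bounded by (simp add: gn)
  have inner: "(\<integral>\<^sup>+y. ennreal (g (x - y)) \<partial>lborel) = (\<integral>\<^sup>+w. ennreal (g w) \<partial>lborel)" for x :: "real^'n"
  proof -
    have e: "g (x - y) = g (- x + y)" for y
      using ev[of "x - y"] by (simp add: algebra_simps)
    have "(\<integral>\<^sup>+y. ennreal (g (x - y)) \<partial>lborel) = (\<integral>\<^sup>+y. ennreal (g (- x + y)) \<partial>lborel)"
      by (simp only: e)
    also have "\<dots> = (\<integral>\<^sup>+w. ennreal (g w) \<partial>lborel)"
      by (rule nn_integral_shift[where g="\<lambda>w. ennreal (g w)"]) simp
    finally show ?thesis .
  qed
  show i1: "integrable (lborel \<Otimes>\<^sub>M lborel) (\<lambda>z. indicator (ball 0 R) (fst z) * g (fst z - snd z))"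
  proof (rule integrableI_bounded)
    show "(\<lambda>z. indicator (ball 0 R) (fst z) * g (fst z - snd z)) \<in> borel_measurable (lborel \<Otimes>\<^sub>M lborel)"
      by measurable
    have "(\<integral>\<^sup>+z. ennreal (norm (indicator (ball 0 R) (fst z) * g (fst z - snd z))) \<partial>(lborel \<Otimes>\<^sub>M lborel))
        = (\<integral>\<^sup>+x. \<integral>\<^sup>+y. ennreal (indicator (ball 0 R) x * g (x - y)) \<partial>lborel \<partial>lborel)"
      by (subst lborel.nn_integral_fst[symmetric]) (auto simp: gn)
    also have "\<dots> = (\<integral>\<^sup>+x. indicator (ball 0 R) (x::real^'n) * (\<integral>\<^sup>+w. ennreal (g w) \<partial>lborel) \<partial>lborel)"
    proof (intro nn_integral_cong)
      fix x :: "real^'n"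
      show "(\<integral>\<^sup>+y. ennreal (indicator (ball 0 R) x * g (x - y)) \<partial>lborel) = indicator (ball 0 R) x * (\<integral>\<^sup>+w. ennreal (g w) \<partial>lborel)"
        by (cases "x \<in> ball 0 R") (simp_all add: inner)
    qed
    also have "\<dots> = (\<integral>\<^sup>+w. ennreal (g w) \<partial>lborel) * emeasure lborel (ball (0::real^'n) R)"
      by (subst nn_integral_multc) (auto simp: mult.commute)
    also have "\<dots> < \<infinity>"
      using C emeasure_lborel_ball_finite[of "0::real^'n" R] by (simp add: ennreal_mult_less_top)
    finally show "(\<integral>\<^sup>+z. ennreal (norm (indicator (ball 0 R) (fst z) * g (fst z - snd z))) \<partial>(lborel \<Otimes>\<^sub>M lborel)) < \<infinity>" .
  qed
  have "integrable (lborel \<Otimes>\<^sub>M lborel) (\<lambda>(x, y). indicator (ball 0 R) (fst (y, x)) * g (fst (y, x) - snd (y, x)))"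
    by (rule lborel_pair.integrable_product_swap[OF i1])
  moreover have "(\<lambda>(x, y). indicator (ball 0 R) (fst (y, x)) * g (fst (y, x) - snd (y, x)))
      = (\<lambda>z. indicator (ball 0 R) (snd z) * g (fst z - snd z))"
  proof
    fix z :: "(real^'n) \<times> (real^'n)"
    show "(case z of (x, y) \<Rightarrow> indicator (ball 0 R) (fst (y, x)) * g (fst (y, x) - snd (y, x)))
        = indicator (ball 0 R) (snd z) * g (fst z - snd z)"
      using ev[of "fst z - snd z"] by (cases z) simp
  qed
  ultimately show "integrable (lborel \<Otimes>\<^sub>M lborel) (\<lambda>z. indicator (ball 0 R) (snd z) * g (fst z - snd z))"
    by simp
qed

lemma tk_lim:
  assumes X: "\<And>n. X n > 0" "X \<longlonglongrightarrow> 0"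
  shows "(\<lambda>n. tk a (X n) v) \<longlonglongrightarrow> norm v powr (-a)"
proof (cases "v = 0")
  case True
  have "tk a (X n) v = 0" for n using X(1)[of n] True by (auto simp: tk_def)
  then show ?thesis using True by simp
next
  case False
  then have "norm v > 0" by simp
  from order_tendstoD(2)[OF X(2) this]
  have "eventually (\<lambda>n. tk a (X n) v = norm v powr (-a)) sequentially"
    by eventually_elim (simp add: tk_def)
  then show ?thesis by (rule tendsto_eventually)
qed

lemma tk_le: "tk a \<epsilon> v \<le> norm v powr (-a)" by (simp add: tk_def)

lemma coord_int:
  fixes k :: "'n::finite"
  assumes s: "0 < s" "s < 1"
  shows "integrable lborel (\<lambda>x::real^'n. indicator (ball 0 R) x * indicator (halfspace k) x * (x $ k) powr (- s))"
proof (rule integrable_from_nn)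
  show "(\<lambda>x::real^'n. indicator (ball 0 R) x * indicator (halfspace k) x * (x $ k) powr (- s)) \<in> borel_measurable borel"
    by measurable
  show "\<And>x. 0 \<le> indicator (ball 0 R) x * indicator (halfspace k) x * ((x::real^'n) $ k) powr (- s)" by simp
  define f where "f b t = (if b = axis k (1::real) then indicator {-R..R} t * ennreal (\<bar>t\<bar> powr (-s)) else indicator {-R..R} t)"
    for b :: "real^'n" and t :: real
  have [measurable]: "f b \<in> borel_measurable borel" for b unfolding f_def by measurable
  have "(\<integral>\<^sup>+x. ennreal (indicator (ball 0 R) x * indicator (halfspace k) x * ((x::real^'n) $ k) powr (- s)) \<partial>lborel)
      \<le> (\<integral>\<^sup>+x. (\<Prod>b\<in>Basis. f b (x \<bullet> b)) \<partial>lborel)"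
  proof (rule nn_integral_mono)
    fix x :: "real^'n"
    show "ennreal (indicator (ball 0 R) x * indicator (halfspace k) x * (x $ k) powr (- s)) \<le> (\<Prod>b\<in>Basis. f b (x \<bullet> b))"
    proof (cases "x \<in> ball 0 R \<and> x \<in> halfspace k")
      case True
      have cb: "x \<bullet> b \<in> {-R..R}" if "b \<in> Basis" for b
        using Basis_le_norm[OF that, of x] True by (auto simp: abs_le_iff)
      have "(\<Prod>b\<in>Basis. f b (x \<bullet> b)) = (\<Prod>b\<in>Basis. if b = axis k 1 then ennreal (\<bar>x \<bullet> b\<bar> powr (-s)) else 1)"
      proof (intro prod.cong refl)
        fix b :: "real^'n" assume "b \<in> Basis"
        then have "indicator {-R..R} (x \<bullet> b) = (1::ennreal)" using cb by simp
        then show "f b (x \<bullet> b) = (if b = axis k 1 then ennreal (\<bar>x \<bullet> b\<bar> powr (-s)) else 1)"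
          unfolding f_def by (simp only: if_distrib) simp
      qed
      also have "\<dots> = ennreal (\<bar>x \<bullet> axis k 1\<bar> powr (-s))"
        by (subst prod.delta) (auto simp: Basis_vec_def)
      also have "\<bar>x \<bullet> axis k 1\<bar> = x $ k"
        using True by (simp add: cart_eq_inner_axis[symmetric] halfspace_def)
      finally show ?thesis using True by simp
    next
      case False then show ?thesis by (auto simp: indicator_def)
    qed
  qed
  also have "\<dots> = (\<Prod>b\<in>Basis. (\<integral>\<^sup>+t. f b t \<partial>lborel))"
    by (rule nn_integral_lborel_prod) auto
  also have "\<dots> < \<infinity>"
  proof (rule prod_fin_less_top)
    fix b :: "real^'n" assume "b \<in> Basis"
    show "(\<integral>\<^sup>+t. f b t \<partial>lborel) < \<infinity>"
    proof (cases "R \<ge> 0")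
      case False
      then have z: "indicator {-R..R} t = (0::ennreal)" for t by (auto simp: indicator_def)
      have "f b = (\<lambda>t. 0)" by (rule ext) (simp add: f_def z)
      then show ?thesis by simp
    next
      case True
      show ?thesis
      proof (cases "b = axis k 1")
        case True' : True
        show ?thesis using nn_1d_pow0[of "-s" R] True s True' by (simp add: f_def)
      next
        case False then show ?thesis using True by (simp add: f_def)
      qed
    qed
  qed
  finally show "(\<integral>\<^sup>+x. ennreal (indicator (ball 0 R) x * indicator (halfspace k) x * ((x::real^'n) $ k) powr (- s)) \<partial>lborel) < \<infinity>" .
qed


lemma Tt_meas:
  fixes \<psi> :: "real^'n::finite \<Rightarrow> real"
  assumes [measurable]: "\<psi> \<in> borel_measurable borel"
  shows "(\<lambda>x. Tt a k \<psi> \<epsilon> x) \<in> borel_measurable lborel"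
proof -
  have "(\<lambda>(x, w). indicator {w. \<epsilon> < norm w} (w::real^'n) *\<^sub>R ((\<psi> (x::real^'n) - \<psi> (eta k x w)) / norm w powr a))
      \<in> borel_measurable (lborel \<Otimes>\<^sub>M lborel)"
    unfolding split_beta' by measurable
  then show ?thesis
    unfolding Tt_def[abs_def] set_lebesgue_integral_def
    by (rule lborel.borel_measurable_lebesgue_integral)
qed

definition hh :: "real \<Rightarrow> real \<Rightarrow> real \<Rightarrow> real^'n::finite \<Rightarrow> real" where
  "hh a Ca Cb w = Ca * (indicator (ball 0 1) w * norm w powr (2 - a)) + Cb * (indicator {w. 1 \<le> norm w} w * norm w powr (- a))"

lemma hh_meas[measurable]: "hh a Ca Cb \<in> borel_measurable borel"
  unfolding hh_def[abs_def] by measurable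

lemma hh_nonneg: "Ca \<ge> 0 \<Longrightarrow> Cb \<ge> 0 \<Longrightarrow> hh a Ca Cb w \<ge> 0"
  by (simp add: hh_def)

lemma hh_even: "hh a Ca Cb (- w) = hh a Ca Cb w"
  by (simp add: hh_def indicator_def)

lemma hh_int:
  assumes "a = real CARD('n::finite) + 2 * s" "0 < s" "s < 1"
  shows "integrable lborel (hh a Ca Cb :: real^'n \<Rightarrow> real)"
  unfolding hh_def[abs_def]
  by (intro Bochner_Integration.integrable_add integrable_mult_right integrable_ball_pow integrable_tail_pow)
     (use assms in auto)

lemma pair_bound:
  fixes \<phi> \<psi> :: "real^'n::finite \<Rightarrow> real"
  assumes Mp: "\<And>z. \<bar>\<phi> z\<bar> \<le> Mp" and Mq: "\<And>z. \<bar>\<psi> z\<bar> \<le> Mq"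
    and Lp: "\<And>u v. \<bar>\<phi> u - \<phi> v\<bar> \<le> Lp * norm (u - v)" and Lp0: "Lp \<ge> 0"
    and Lq: "\<And>u v. \<bar>\<psi> u - \<psi> v\<bar> \<le> Lq * norm (u - v)" and Lq0: "Lq \<ge> 0"
    and Rp: "\<And>z. \<phi> z \<noteq> 0 \<Longrightarrow> norm z < R" and Rq: "\<And>z. \<psi> z \<noteq> 0 \<Longrightarrow> norm z < R"
    and a: "a > 0" and xk: "x $ k \<ge> 0" and yk: "y $ k \<ge> 0"
  shows "\<bar>(\<phi> x - \<phi> y) * (\<psi> x - \<psi> y)\<bar> * (norm (x - y) powr (-a) + norm (x - reflect k y) powr (-a))
     \<le> 2 * (indicator (ball 0 R) x * hh a (Lp * Lq) (4 * Mp * Mq) (x - y) + indicator (ball 0 R) y * hh a (Lp * Lq) (4 * Mp * Mq) (x - y))"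
proof -
  have Mp0: "Mp \<ge> 0" using Mp[of 0] by linarith
  have Mq0: "Mq \<ge> 0" using Mq[of 0] by linarith
  let ?h = "hh a (Lp * Lq) (4 * Mp * Mq) (x - y)"
  have h0: "?h \<ge> 0" using Lp0 Lq0 Mp0 Mq0 by (intro hh_nonneg) auto
  define p where "p = \<bar>(\<phi> x - \<phi> y) * (\<psi> x - \<psi> y)\<bar>"
  have rhs0: "0 \<le> 2 * (indicator (ball 0 R) x * ?h + indicator (ball 0 R) y * ?h)"
    using h0 by simp
  show ?thesis
  proof (cases "x = y")
    case True then show ?thesis using rhs0 by simp
  next
    case False
    then have d: "norm (x - y) > 0" by simp
    have "norm (x - reflect k y) powr (-a) \<le> norm (x - y) powr (-a)"
      using norm_diff_le_reflect[OF xk yk] d a by (intro powr_mono2') auto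
    then have K: "p * (norm (x - y) powr (-a) + norm (x - reflect k y) powr (-a)) \<le> 2 * (p * norm (x - y) powr (-a))"
    proof -
      have "p * norm (x - reflect k y) powr (-a) \<le> p * norm (x - y) powr (-a)"
        unfolding p_def by (rule mult_left_mono) (use \<open>norm (x - reflect k y) powr (-a) \<le> _\<close> in auto)
      then show ?thesis by (simp add: algebra_simps)
    qed
    have ph: "p * norm (x - y) powr (-a) \<le> ?h"
    proof (cases "norm (x - y) < 1")
      case True
      have "p \<le> (Lp * norm (x - y)) * (Lq * norm (x - y))"
        unfolding p_def abs_mult using Lp[of x y] Lq[of x y] by (intro mult_mono) auto
      then have "p * norm (x - y) powr (-a) \<le> ((Lp * norm (x - y)) * (Lq * norm (x - y))) * norm (x - y) powr (-a)"
        by (rule mult_right_mono) simp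
      also have "\<dots> = (Lp * Lq) * ((norm (x - y))\<^sup>2 * norm (x - y) powr (-a))"
        by (simp add: power2_eq_square algebra_simps)
      also have "(norm (x - y))\<^sup>2 * norm (x - y) powr (-a) = norm (x - y) powr (2 - a)"
      proof -
        have "norm (x - y) powr (2 - a) = norm (x - y) powr 2 * norm (x - y) powr (-a)"
          using powr_add[of "norm (x - y)" 2 "-a"] by simp
        also have "norm (x - y) powr 2 = (norm (x - y))\<^sup>2" using d by (simp add: powr_numeral)
        finally show ?thesis by simp
      qed
      also have "(Lp * Lq) * norm (x - y) powr (2 - a) = ?h"
        using True by (simp add: hh_def indicator_def)
      finally show ?thesis .
    next
      case False
      have "p \<le> (2 * Mp) * (2 * Mq)"
        unfolding p_def abs_mult
        using Mp[of x] Mp[of y] Mq[of x] Mq[of y] by (intro mult_mono) auto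
      then have "p * norm (x - y) powr (-a) \<le> (4 * Mp * Mq) * norm (x - y) powr (-a)"
        by (auto intro!: mult_right_mono)
      also have "\<dots> = ?h" using False by (simp add: hh_def indicator_def)
      finally show ?thesis .
    qed
    show ?thesis
    proof (cases "x \<in> ball 0 R \<or> y \<in> ball 0 R")
      case True
      have "?h \<le> indicator (ball 0 R) x * ?h + indicator (ball 0 R) y * ?h"
        using True h0 by (auto simp: indicator_def)
      then have "p * norm (x - y) powr (-a) \<le> indicator (ball 0 R) x * ?h + indicator (ball 0 R) y * ?h"
        using ph by (rule order_trans[rotated])
      then have "2 * (p * norm (x - y) powr (-a)) \<le> 2 * (indicator (ball 0 R) x * ?h + indicator (ball 0 R) y * ?h)"
        by simp
      then show ?thesis using K unfolding p_def by (rule order_trans[rotated])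
    next
      case False
      then have "\<phi> x = 0" "\<phi> y = 0" using Rp[of x] Rp[of y] by auto
      then show ?thesis using rhs0 by simp
    qed
  qed
qed


lemma iter_to_pair:
  fixes F :: "real^'n::finite \<Rightarrow> real^'n \<Rightarrow> real"
  assumes "integrable (lborel \<Otimes>\<^sub>M lborel) (\<lambda>z. indicator (halfspace k) (fst z) * indicator (halfspace k) (snd z) * F (fst z) (snd z))"
  shows "(LINT x:halfspace k|lborel. LINT y:halfspace k|lborel. F x y)
       = integral\<^sup>L (lborel \<Otimes>\<^sub>M lborel) (\<lambda>z. indicator (halfspace k) (fst z) * indicator (halfspace k) (snd z) * F (fst z) (snd z))"
proof -
  have "(LINT x:halfspace k|lborel. LINT y:halfspace k|lborel. F x y)
      = (\<integral>x. (\<integral>y. (\<lambda>z. indicator (halfspace k) (fst z) * indicator (halfspace k) (snd z) * F (fst z) (snd z)) (x, y) \<partial>lborel) \<partial>lborel)"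
    unfolding set_lebesgue_integral_def
  proof (intro Bochner_Integration.integral_cong refl)
    fix x :: "real^'n"
    show "indicator (halfspace k) x *\<^sub>R (\<integral>y. indicator (halfspace k) y *\<^sub>R F x y \<partial>lborel)
        = (\<integral>y. (\<lambda>z. indicator (halfspace k) (fst z) * indicator (halfspace k) (snd z) * F (fst z) (snd z)) (x, y) \<partial>lborel)"
      by (cases "x \<in> halfspace k") simp_all
  qed
  also have "\<dots> = integral\<^sup>L (lborel \<Otimes>\<^sub>M lborel) (\<lambda>z. indicator (halfspace k) (fst z) * indicator (halfspace k) (snd z) * F (fst z) (snd z))"
    by (rule lborel_pair.integral_fst'[OF assms])
  finally show ?thesis .
qed

lemma main_eq:
  fixes \<phi> \<psi> :: "real^'n::finite \<Rightarrow> real" and k :: 'n and s :: real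
  assumes s: "0 < s" "s < 1"
    and mp[measurable]: "\<phi> \<in> borel_measurable borel" and Mp: "\<And>z. \<bar>\<phi> z\<bar> \<le> Mp"
    and Lp: "\<And>u v. \<bar>\<phi> u - \<phi> v\<bar> \<le> Lp * norm (u - v)" and Lp0: "Lp \<ge> 0"
    and Rp: "\<And>z. \<phi> z \<noteq> 0 \<Longrightarrow> norm z < R"
    and mq[measurable]: "\<psi> \<in> borel_measurable borel" and Mq: "\<And>z. \<bar>\<psi> z\<bar> \<le> Mq"
    and Lq: "\<And>u v. \<bar>\<psi> u - \<psi> v\<bar> \<le> Lq * norm (u - v)" and Lq0: "Lq \<ge> 0"
    and Bq: "\<And>z w. \<bar>2 * \<psi> z - \<psi> (z + w) - \<psi> (z - w)\<bar> \<le> Bq * (norm w)\<^sup>2" and Bq0: "Bq \<ge> 0"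
    and Rq: "\<And>z. \<psi> z \<noteq> 0 \<Longrightarrow> norm z < R"
  shows "(LINT x:halfspace k|lborel. \<phi> x * frac_lap_SR s k \<psi> x)
       = 1/2 * (LINT x:halfspace k|lborel. LINT y:halfspace k|lborel. (\<phi> x - \<phi> y) * (\<psi> x - \<psi> y) * kernel_half s k x y)"
proof -
  define a where "a = real CARD('n) + 2 * s"
  have a_gt: "a > real CARD('n)" using s by (simp add: a_def)
  have a0: "a > 0" using s by (simp add: a_def)
  define c where "c = c_ds s k"
  let ?H = "halfspace k"
  define X where "X n = 1 / (real n + 1)" for n :: nat
  have X0: "X n > 0" for n by (simp add: X_def)
  have Xl: "X \<longlonglongrightarrow> 0" unfolding X_def using LIMSEQ_inverse_real_of_nat
    by (simp add: divide_inverse add.commute)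
  have Xr: "filterlim X (at_right 0) sequentially"
    unfolding filterlim_at using X0 Xl by (auto intro!: always_eventually simp: less_imp_neq[symmetric])
  have Mp0: "Mp \<ge> 0" using Mp[of 0] by linarith
  have Mq0: "Mq \<ge> 0" using Mq[of 0] by linarith

  define Lx where "Lx x = Lim (at_right 0) (\<lambda>\<epsilon>. Tt a k \<psi> \<epsilon> x)" for x
  have fl: "frac_lap_SR s k \<psi> x = c * Lx x" for x
    unfolding frac_lap_SR_def Lx_def Tt_def c_def a_def ..
  have lim_x: "(\<lambda>n. Tt a k \<psi> (X n) x) \<longlonglongrightarrow> Lx x" if "x \<in> ?H" for x
  proof -
    have xk: "x $ k > 0" using that by (simp add: halfspace_def)
    interpret B: stepB \<psi> Mq Lq Bq s a k x
      by unfold_locales (use mq Mq Lq Lq0 Bq Bq0 s a_def xk in auto)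
    have T: "((\<lambda>\<epsilon>. Tt a k \<psi> \<epsilon> x) \<longlongrightarrow> (\<integral>w. B.Af 0 w \<partial>lborel) + (\<integral>w. B.Qf w \<partial>lborel)) (at_right 0)"
      by (rule B.Tt_lim)
    have "Lx x = (\<integral>w. B.Af 0 w \<partial>lborel) + (\<integral>w. B.Qf w \<partial>lborel)"
      unfolding Lx_def by (rule tendsto_Lim[OF _ T]) simp
    then show ?thesis using filterlim_compose[OF T Xr] by (simp add: comp_def)
  qed

  define f where "f n x = indicator ?H x * (\<phi> x * (c * Tt a k \<psi> (X n) x))" for n x
  define g where "g x = indicator ?H x * (\<phi> x * frac_lap_SR s k \<psi> x)" for x
  have fm[measurable]: "f n \<in> borel_measurable lborel" for n
  proof -
    have [measurable]: "(\<lambda>x. Tt a k \<psi> (X n) x) \<in> borel_measurable lborel" by (rule Tt_meas) simp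
    show ?thesis unfolding f_def[abs_def] by measurable
  qed
  have fg: "(\<lambda>n. f n x) \<longlonglongrightarrow> g x" for x
  proof (cases "x \<in> ?H")
    case True
    show ?thesis unfolding f_def g_def fl using True
      by (auto intro!: tendsto_intros lim_x)
  next
    case False then show ?thesis by (simp add: f_def g_def)
  qed
  have gm: "g \<in> borel_measurable lborel"
    by (rule borel_measurable_LIMSEQ_metric[OF fm fg])
  define I2 where "I2 = (\<integral>w. indicator (ball 0 R) w * norm (w::real^'n) powr (2 - a) \<partial>lborel)"
  define F0 where "F0 = (\<integral>w. f0 a s (w::real^'n) \<partial>lborel)"
  have I20: "I2 \<ge> 0" unfolding I2_def by (intro integral_nonneg_AE) simp
  have F00: "F0 \<ge> 0" unfolding F0_def by (intro integral_nonneg_AE) (simp add: f0_nonneg)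
  define G where "G x = Mp * \<bar>c\<bar> * ((Bq / 2 * I2 + 2 * Mq * F0) * indicator (ball 0 R \<inter> ?H) x
      + Lq * F0 * (indicator (ball 0 R) x * indicator ?H x * (x $ k) powr (- s)))" for x :: "real^'n"
  have Gi: "integrable lborel G"
  proof -
    have i1: "integrable lborel (indicator (ball 0 R \<inter> ?H) :: real^'n \<Rightarrow> real)"
    proof (rule integrable_real_indicator)
      show "ball 0 R \<inter> ?H \<in> sets lborel" by simp
      have "emeasure lborel (ball 0 R \<inter> ?H) \<le> emeasure lborel (ball (0::real^'n) R)"
        by (rule emeasure_mono) auto
      also have "\<dots> < \<infinity>" by (rule emeasure_lborel_ball_finite)
      finally show "emeasure lborel (ball 0 R \<inter> ?H) < \<infinity>" .
    qed
    show ?thesis unfolding G_def[abs_def]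
      by (intro integrable_mult_right Bochner_Integration.integrable_add i1 coord_int s)
  qed
  have fG: "\<bar>f n x\<bar> \<le> G x" for n x
  proof (cases "x \<in> ?H \<and> \<phi> x \<noteq> 0")
    case True
    then have xk: "x $ k > 0" and xR: "norm x < R" using Rp by (auto simp: halfspace_def)
    interpret B: stepB \<psi> Mq Lq Bq s a k x
      by unfold_locales (use mq Mq Lq Lq0 Bq Bq0 s a_def xk in auto)
    have tR: "B.t \<le> R" using component_le_norm_cart[of x k] xR by (simp add: B.t_def)
    have Tb: "\<bar>Tt a k \<psi> (X n) x\<bar> \<le> Bq / 2 * I2 + (Lq * (x $ k) powr (-s) + 2 * Mq) * F0"
      using B.Tt_bound[OF X0 tR] by (simp add: I2_def F0_def B.t_def)
    have "\<bar>f n x\<bar> = \<bar>\<phi> x\<bar> * (\<bar>c\<bar> * \<bar>Tt a k \<psi> (X n) x\<bar>)"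
      using True by (simp add: f_def abs_mult)
    also have "\<dots> \<le> Mp * (\<bar>c\<bar> * (Bq / 2 * I2 + (Lq * (x $ k) powr (-s) + 2 * Mq) * F0))"
      using Mp Tb Mp0 by (intro mult_mono mult_left_mono) auto
    also have "\<dots> = G x" using True xR by (simp add: G_def algebra_simps)
    finally show ?thesis .
  next
    case False
    have "0 \<le> G x" unfolding G_def using Mp0 Bq0 Mq0 Lq0 I20 F00
      by (intro mult_nonneg_nonneg add_nonneg_nonneg) auto
    then show ?thesis using False by (auto simp: f_def)
  qed
  have LHSlim: "(\<lambda>n. integral\<^sup>L lborel (f n)) \<longlonglongrightarrow> integral\<^sup>L lborel g"
    by (rule integral_dominated_convergence[OF gm fm Gi]) (use fg fG in auto)
  have LHSeq: "(LINT x:?H|lborel. \<phi> x * frac_lap_SR s k \<psi> x) = integral\<^sup>L lborel g"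
    unfolding set_lebesgue_integral_def g_def by simp

  define P where "P n z = indicator ?H (fst z) * indicator ?H (snd z) * ((\<phi> (fst z) - \<phi> (snd z)) * (\<psi> (fst z) - \<psi> (snd z)) * Ke a k (X n) (fst z) (snd z))"
    for n and z :: "(real^'n) \<times> (real^'n)"
  define K0 where "K0 x y = norm (x - y) powr (-a) + norm (x - reflect k y) powr (-a)" for x y :: "real^'n"
  define P0 where "P0 z = indicator ?H (fst z) * indicator ?H (snd z) * ((\<phi> (fst z) - \<phi> (snd z)) * (\<psi> (fst z) - \<psi> (snd z)) * K0 (fst z) (snd z))"
    for z :: "(real^'n) \<times> (real^'n)"
  have [measurable]: "P n \<in> borel_measurable (lborel \<Otimes>\<^sub>M lborel)" for n unfolding P_def[abs_def] by measurable
  have [measurable]: "P0 \<in> borel_measurable (lborel \<Otimes>\<^sub>M lborel)" unfolding P0_def[abs_def] K0_def[abs_def] by measurable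
  define D where "D z = 2 * (indicator (ball 0 R) (fst z) * hh a (Lp * Lq) (4 * Mp * Mq) (fst z - snd z)
      + indicator (ball 0 R) (snd z) * hh a (Lp * Lq) (4 * Mp * Mq) (fst z - snd z))" for z :: "(real^'n) \<times> (real^'n)"
  have hhi: "integrable lborel (hh a (Lp * Lq) (4 * Mp * Mq) :: real^'n \<Rightarrow> real)"
    by (rule hh_int[OF a_def s])
  have hhn: "hh a (Lp * Lq) (4 * Mp * Mq) w \<ge> 0" for w :: "real^'n"
    using Lp0 Lq0 Mp0 Mq0 by (intro hh_nonneg) auto
  have Di: "integrable (lborel \<Otimes>\<^sub>M lborel) D"
    unfolding D_def[abs_def]
    by (intro integrable_mult_right Bochner_Integration.integrable_add pair_int_gen hhi hh_even hhn) simp_all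
  have P0D: "\<bar>P0 z\<bar> \<le> D z" for z
  proof (cases "fst z \<in> ?H \<and> snd z \<in> ?H")
    case True
    then have "fst z $ k \<ge> 0" "snd z $ k \<ge> 0" by (auto simp: halfspace_def)
    from pair_bound[OF Mp Mq Lp Lp0 Lq Lq0 Rp Rq a0 this]
    show ?thesis using True by (simp add: P0_def D_def K0_def abs_mult)
  next
    case False
    have "0 \<le> D z" unfolding D_def using hhn by simp
    then show ?thesis using False by (auto simp: P0_def)
  qed
  have PD: "\<bar>P n z\<bar> \<le> D z" for n z
  proof -
    have "Ke a k (X n) (fst z) (snd z) \<le> K0 (fst z) (snd z)"
      unfolding Ke_def K0_def using tk_le by (intro add_mono) auto
    then have "\<bar>P n z\<bar> \<le> \<bar>P0 z\<bar>"
      unfolding P_def P0_def abs_mult using Ke_nonneg[of a k "X n" "fst z" "snd z"] by (intro mult_left_mono) auto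
    then show ?thesis using P0D[of z] by linarith
  qed
  have PP0: "(\<lambda>n. P n z) \<longlonglongrightarrow> P0 z" for z
  proof -
    have "(\<lambda>n. Ke a k (X n) (fst z) (snd z)) \<longlonglongrightarrow> K0 (fst z) (snd z)"
      unfolding Ke_def K0_def by (intro tendsto_add tk_lim X0 Xl)
    then show ?thesis unfolding P_def P0_def by (intro tendsto_intros)
  qed
  have Pi: "integrable (lborel \<Otimes>\<^sub>M lborel) (P n)" for n
  proof (rule Bochner_Integration.integrable_bound[OF Di])
    show "AE z in lborel \<Otimes>\<^sub>M lborel. norm (P n z) \<le> norm (D z)"
    proof (intro AE_I2)
      fix z show "norm (P n z) \<le> norm (D z)" using PD[of n z] abs_ge_self[of "D z"] by simp
    qed
  qed simp
  have P0i: "integrable (lborel \<Otimes>\<^sub>M lborel) P0"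
  proof (rule Bochner_Integration.integrable_bound[OF Di])
    show "AE z in lborel \<Otimes>\<^sub>M lborel. norm (P0 z) \<le> norm (D z)"
    proof (intro AE_I2)
      fix z show "norm (P0 z) \<le> norm (D z)" using P0D[of z] abs_ge_self[of "D z"] by simp
    qed
  qed simp
  have Plim: "(\<lambda>n. integral\<^sup>L (lborel \<Otimes>\<^sub>M lborel) (P n)) \<longlonglongrightarrow> integral\<^sup>L (lborel \<Otimes>\<^sub>M lborel) P0"
    by (rule integral_dominated_convergence[OF _ _ Di]) (use PP0 PD in auto)
  have fn_eq: "integral\<^sup>L lborel (f n) = c / 2 * integral\<^sup>L (lborel \<Otimes>\<^sub>M lborel) (P n)" for n
  proof -
    have "integral\<^sup>L lborel (f n) = c * (LINT x:?H|lborel. \<phi> x * Tt a k \<psi> (X n) x)"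
      unfolding f_def set_lebesgue_integral_def by (simp add: algebra_simps)
    also have "(LINT x:?H|lborel. \<phi> x * Tt a k \<psi> (X n) x)
        = 1/2 * (LINT x:?H|lborel. LINT y:?H|lborel. (\<phi> x - \<phi> y) * (\<psi> x - \<psi> y) * Ke a k (X n) x y)"
      by (rule stepC[OF mp mq Mp Mq Rp a_gt X0])
    also have "(LINT x:?H|lborel. LINT y:?H|lborel. (\<phi> x - \<phi> y) * (\<psi> x - \<psi> y) * Ke a k (X n) x y)
        = integral\<^sup>L (lborel \<Otimes>\<^sub>M lborel) (P n)"
      unfolding P_def using Pi[of n] unfolding P_def by (subst iter_to_pair) (simp_all add: mult.assoc)
    finally show ?thesis by simp
  qed
  have RHSeq: "1/2 * (LINT x:?H|lborel. LINT y:?H|lborel. (\<phi> x - \<phi> y) * (\<psi> x - \<psi> y) * kernel_half s k x y)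
      = c / 2 * integral\<^sup>L (lborel \<Otimes>\<^sub>M lborel) P0"
  proof -
    have kh: "kernel_half s k x y = c * K0 x y" for x y
      by (simp add: kernel_half_def K0_def c_def a_def)
    have "(LINT x:?H|lborel. LINT y:?H|lborel. (\<phi> x - \<phi> y) * (\<psi> x - \<psi> y) * kernel_half s k x y)
        = (LINT x:?H|lborel. LINT y:?H|lborel. c * ((\<phi> x - \<phi> y) * (\<psi> x - \<psi> y) * K0 x y))"
      by (simp add: kh algebra_simps)
    also have "\<dots> = c * (LINT x:?H|lborel. LINT y:?H|lborel. (\<phi> x - \<phi> y) * (\<psi> x - \<psi> y) * K0 x y)"
    proof -
      define F where "F x y = (\<phi> x - \<phi> y) * (\<psi> x - \<psi> y) * K0 x y" for x y
      have inner: "(\<integral>y. indicator ?H y * (c * F x y) \<partial>lborel) = c * (\<integral>y. indicator ?H y * F x y \<partial>lborel)" for x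
      proof -
        have "(\<integral>y. indicator ?H y * (c * F x y) \<partial>lborel) = (\<integral>y. c * (indicator ?H y * F x y) \<partial>lborel)"
          by (intro Bochner_Integration.integral_cong) auto
        then show ?thesis by simp
      qed
      have "(\<integral>x. indicator ?H x *\<^sub>R (\<integral>y. indicator ?H y *\<^sub>R (c * F x y) \<partial>lborel) \<partial>lborel)
          = (\<integral>x. c * (indicator ?H x *\<^sub>R (\<integral>y. indicator ?H y *\<^sub>R F x y \<partial>lborel)) \<partial>lborel)"
        by (intro Bochner_Integration.integral_cong) (auto simp: inner)
      also have "\<dots> = c * (\<integral>x. indicator ?H x *\<^sub>R (\<integral>y. indicator ?H y *\<^sub>R F x y \<partial>lborel) \<partial>lborel)"
        by simp
      finally show ?thesis unfolding set_lebesgue_integral_def F_def .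
    qed
    also have "(LINT x:?H|lborel. LINT y:?H|lborel. (\<phi> x - \<phi> y) * (\<psi> x - \<psi> y) * K0 x y)
        = integral\<^sup>L (lborel \<Otimes>\<^sub>M lborel) P0"
      unfolding P0_def using P0i unfolding P0_def by (subst iter_to_pair) (simp_all add: mult.assoc)
    finally show ?thesis by simp
  qed
  have "(\<lambda>n. integral\<^sup>L lborel (f n)) \<longlonglongrightarrow> c / 2 * integral\<^sup>L (lborel \<Otimes>\<^sub>M lborel) P0"
    unfolding fn_eq by (intro tendsto_intros Plim)
  then have "integral\<^sup>L lborel g = c / 2 * integral\<^sup>L (lborel \<Otimes>\<^sub>M lborel) P0"
    using LHSlim LIMSEQ_unique by blast
  then show ?thesis using LHSeq RHSeq by simp
qed


theorem proposition5p2: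
  fixes s :: real and k :: "'n::finite" and \<phi> \<psi> :: "real^'n \<Rightarrow> real"
  assumes "0 < s" and "s < 1"
    and "C2 \<phi>" and "bounded {x. \<phi> x \<noteq> 0}"
    and "C2 \<psi>" and "bounded {x. \<psi> x \<noteq> 0}"
  shows "(LINT x:halfspace k|lborel. \<phi> x * frac_lap_SR s k \<psi> x)
           = 1/2 * (LINT x:halfspace k|lborel. LINT y:halfspace k|lborel.
                      (\<phi> x - \<phi> y) * (\<psi> x - \<psi> y) * kernel_half s k x y)
         \<and> (LINT x:halfspace k|lborel. \<phi> x * frac_lap_SR s k \<psi> x)
           = (LINT x:halfspace k|lborel. \<psi> x * frac_lap_SR s k \<phi> x)"
proof -
  obtain Mp Lp Bp Rp where p: "Rp > 0" "Mp \<ge> 0" "Lp \<ge> 0" "Bp \<ge> 0"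
    "\<And>x. \<bar>\<phi> x\<bar> \<le> Mp" "\<And>x y. \<bar>\<phi> x - \<phi> y\<bar> \<le> Lp * norm (x - y)"
    "\<And>x w. \<bar>2 * \<phi> x - \<phi> (x + w) - \<phi> (x - w)\<bar> \<le> Bp * (norm w)\<^sup>2"
    "\<And>x. \<phi> x \<noteq> 0 \<Longrightarrow> norm x < Rp" "continuous_on UNIV \<phi>"
    by (rule C2_nice[OF assms(3,4)], rule that)
  obtain Mq Lq Bq Rq where q: "Rq > 0" "Mq \<ge> 0" "Lq \<ge> 0" "Bq \<ge> 0"
    "\<And>x. \<bar>\<psi> x\<bar> \<le> Mq" "\<And>x y. \<bar>\<psi> x - \<psi> y\<bar> \<le> Lq * norm (x - y)"
    "\<And>x w. \<bar>2 * \<psi> x - \<psi> (x + w) - \<psi> (x - w)\<bar> \<le> Bq * (norm w)\<^sup>2"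
    "\<And>x. \<psi> x \<noteq> 0 \<Longrightarrow> norm x < Rq" "continuous_on UNIV \<psi>"
    by (rule C2_nice[OF assms(5,6)], rule that)
  define R where "R = max Rp Rq"
  have Rp': "norm x < R" if "\<phi> x \<noteq> 0" for x using p(8)[OF that] by (simp add: R_def)
  have Rq': "norm x < R" if "\<psi> x \<noteq> 0" for x using q(8)[OF that] by (simp add: R_def)
  have mp: "\<phi> \<in> borel_measurable borel" by (rule borel_measurable_continuous_onI[OF p(9)])
  have mq: "\<psi> \<in> borel_measurable borel" by (rule borel_measurable_continuous_onI[OF q(9)])
  have E1: "(LINT x:halfspace k|lborel. \<phi> x * frac_lap_SR s k \<psi> x)
       = 1/2 * (LINT x:halfspace k|lborel. LINT y:halfspace k|lborel. (\<phi> x - \<phi> y) * (\<psi> x - \<psi> y) * kernel_half s k x y)"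
    by (rule main_eq[OF assms(1,2) mp p(5,6,3) Rp' mq q(5,6,3,7,4) Rq'])
  have E2: "(LINT x:halfspace k|lborel. \<psi> x * frac_lap_SR s k \<phi> x)
       = 1/2 * (LINT x:halfspace k|lborel. LINT y:halfspace k|lborel. (\<psi> x - \<psi> y) * (\<phi> x - \<phi> y) * kernel_half s k x y)"
    by (rule main_eq[OF assms(1,2) mq q(5,6,3) Rq' mp p(5,6,3,7,4) Rp'])
  have C: "\<And>x y. (\<psi> x - \<psi> y) * (\<phi> x - \<phi> y) = (\<phi> x - \<phi> y) * (\<psi> x - \<psi> y)"
    by (rule mult.commute)
  have E2': "(LINT x:halfspace k|lborel. \<psi> x * frac_lap_SR s k \<phi> x)
       = 1/2 * (LINT x:halfspace k|lborel. LINT y:halfspace k|lborel. (\<phi> x - \<phi> y) * (\<psi> x - \<psi> y) * kernel_half s k x y)"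
    using E2 unfolding C .
  show ?thesis
  proof (rule conjI[OF E1])
    show "(LINT x:halfspace k|lborel. \<phi> x * frac_lap_SR s k \<psi> x)
           = (LINT x:halfspace k|lborel. \<psi> x * frac_lap_SR s k \<phi> x)"
      unfolding E1 E2' ..
  qed
qed


end
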